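(* Let $n=2$, $S=K[x,y]$, $\mathbf t,\mathbf k\in\mathbb N^2$ with $\mathbf 1\le\mathbf k\le\mathbf t+\mathbf 1$, and let $I$ be a positively $\mathbf t$-determined monomial ideal. Then $H^1\mathcal N^{\mathbf k}_{\mathbf t}(S/I)=0$ if and only if either (i) $(S/I)_{\mathbf t+\mathbf 1-\mathbf k}\ne0$, or (ii) every $\mathbf x\in\mathbb N^2$ with $(S/I)_{\mathbf x}\ne0$ lies in $[\mathbf 0,\mathbf t-\mathbf k]$.
   Context: $K$ a field, $S$ is $\mathbb Z^2$-graded with $\deg x=\varepsilon_1$, $\deg y=\varepsilon_2$; $\mathbf 1=(1,1)$; componentwise order; $[\mathbf a,\mathbf b]=\{\mathbf x:\mathbf a\le\mathbf x\le\mathbf b\}$; $M(\mathbf a)_{\mathbf r}=M_{\mathbf a+\mathbf r}$. A monomial ideal $I$ is positively $\mathbf t$-determined if each minimal generator $x^{a_1}y^{a_2}$ has $\mathbf a\le\mathbf t$; an $\mathbb N^2$-graded module is positively $\mathbf t$-determined if multiplication by the $i$-th variable $M_{\mathbf a}\to M_{\mathbf a+\varepsilon_i}$ is bijective whenever $a_i\ge t_i$. For order-preserving $q:\mathbb N^2\to\mathbb Z^2$, $(q^*M)_{\mathbf a}=M_{q(\mathbf a)}$ with monomials of degree $\mathbf b$ acting via the monomial of degree $q(\mathbf a+\mathbf b)-q(\mathbf a)$; $p_{\mathbf t}(\mathbf a)=(\min(a_i,t_i))_i$. Chain complexes, $H^iC=H_{-i}C$. Nakayama functor: $P_{t\varepsilon_j}$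 is the complex $x_j^tS\hookrightarrow S$ ($S$ in degree 0, $x_1=x,x_2=y$); for $\mathbf k\in\{0,1\}^2$, $P^{\mathbf k}_{\mathbf t}=\bigotimes_jP_{t_j\varepsilon_j}^{\otimes k_j}$ and $\mathcal N^{\mathbf k}_{\mathbf t}(C)=p_{\mathbf t}^*\underline{\operatorname{Hom}}_S(P^{\mathbf k}_{\mathbf t+\mathbf 1},C(-\mathbf k))$; for $\mathbf k\in\mathbb N^2$, $\mathcal N^{\mathbf k}_{\mathbf t}=(\mathcal N^{\varepsilon_1}_{\mathbf t})^{\circ k_1}\circ(\mathcal N^{\varepsilon_2}_{\mathbf t})^{\circ k_2}$. *)

theory Defs
  imports Main
begin

text \<open>
Concrete model of Z^2-graded chain complexes of modules over S = K[x,y].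
Elements of every graded piece live in the uniform type  bool list => K
(a direct sum encoding; pairs (u,w) are encoded by tagging with False/True).
A complex C consists of
  cc C n a      : the K-subspace of homological degree n and multidegree a,
  dd C n a      : the differential  C_n,a -> C_(n-1),a,
  mul C j n a   : multiplication by the j-th variable (j=1: x, j=2: y),
                  C_n,a -> C_n,(a+eps j).
\<close>

type_synonym 'k vec = "bool list \<Rightarrow> 'k"

record 'k gcx =
  cc  :: "int \<Rightarrow> int \<times> int \<Rightarrow> 'k vec set"
  dd  :: "int \<Rightarrow> int \<times> int \<Rightarrow> 'k vec \<Rightarrow> 'k vec"
  mul :: "nat \<Rightarrow> int \<Rightarrow> int \<times> int \<Rightarrow> 'k vec \<Rightarrow> 'k vec"

definition zv :: "'k::zero vec" where "zv = (\<lambda>_. 0)"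

definition vsub :: "'k::minus vec \<Rightarrow> 'k vec \<Rightarrow> 'k vec" where
  "vsub u w = (\<lambda>l. u l - w l)"

definition vneg :: "'k::uminus vec \<Rightarrow> 'k vec" where
  "vneg u = (\<lambda>l. - u l)"

definition constv :: "'k::zero \<Rightarrow> 'k vec" where
  "constv c = (\<lambda>l. if l = [] then c else 0)"

definition pr :: "'k::zero vec \<Rightarrow> 'k vec \<Rightarrow> 'k vec" where
  "pr u w = (\<lambda>l. case l of [] \<Rightarrow> 0 | b # l' \<Rightarrow> (if b then w l' else u l'))"

definition fstv :: "'k vec \<Rightarrow> 'k vec" where "fstv f = (\<lambda>l. f (False # l))"
definition sndv :: "'k vec \<Rightarrow> 'k vec" where "sndv f = (\<lambda>l. f (True # l))"

definition eps :: "nat \<Rightarrow> int \<times> int" where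
  "eps j = (if j = 1 then (1,0) else if j = 2 then (0,1) else (0,0))"

definition padd :: "int \<times> int \<Rightarrow> int \<times> int \<Rightarrow> int \<times> int" where
  "padd a b = (fst a + fst b, snd a + snd b)"

definition psub :: "int \<times> int \<Rightarrow> int \<times> int \<Rightarrow> int \<times> int" where
  "psub a b = (fst a - fst b, snd a - snd b)"

definition psc :: "int \<Rightarrow> int \<times> int \<Rightarrow> int \<times> int" where
  "psc s a = (s * fst a, s * snd a)"

definition pint :: "nat \<times> nat \<Rightarrow> int \<times> int" where
  "pint a = (int (fst a), int (snd a))"

definition nonneg :: "int \<times> int \<Rightarrow> bool" where
  "nonneg a \<longleftrightarrow> 0 \<le> fst a \<and> 0 \<le> snd a"

definition ple :: "int \<times> int \<Rightarrow> int \<times> int \<Rightarrow> bool" where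
  "ple a b \<longleftrightarrow> fst a \<le> fst b \<and> snd a \<le> snd b"

definition nle :: "nat \<times> nat \<Rightarrow> nat \<times> nat \<Rightarrow> bool" where
  "nle a b \<longleftrightarrow> fst a \<le> fst b \<and> snd a \<le> snd b"

fun mulpow :: "'k gcx \<Rightarrow> nat \<Rightarrow> int \<Rightarrow> int \<times> int \<Rightarrow> nat \<Rightarrow> 'k vec \<Rightarrow> 'k vec" where
  "mulpow C j n a 0 v = v"
| "mulpow C j n a (Suc m) v = mul C j n (padd a (psc (int m) (eps j))) (mulpow C j n a m v)"

text \<open>Hom_S(P_{s eps_j}, C), where P_{s eps_j} is the complex x_j^s S \<hookrightarrow> S
  (S in homological degree 0, x_j^s S = S(-s eps_j) in degree 1).
  A degree-n element at multidegree r is a pair (u,w), u in (C_n)_r, w in (C_(n+1))_(r + s eps_j);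
  differential D f = d o f - (-1)^n f o d_P.\<close>
definition homP :: "nat \<Rightarrow> nat \<Rightarrow> 'k::comm_ring_1 gcx \<Rightarrow> 'k gcx" where
  "homP j s C = \<lparr>
     cc = (\<lambda>n r. {pr u w | u w. u \<in> cc C n r \<and> w \<in> cc C (n+1) (padd r (psc (int s) (eps j)))}),
     dd = (\<lambda>n r f. pr (dd C n r (fstv f))
                      (vsub (dd C (n+1) (padd r (psc (int s) (eps j))) (sndv f))
                            (if even n then mulpow C j n r s (fstv f)
                             else vneg (mulpow C j n r s (fstv f))))),
     mul = (\<lambda>i n r f. pr (mul C i n r (fstv f))
                          (mul C i (n+1) (padd r (psc (int s) (eps j))) (sndv f))) \<rparr>"

definition twistneg :: "'k gcx \<Rightarrow> int \<times> int \<Rightarrow> 'k gcx" where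
  "twistneg C b = \<lparr> cc = (\<lambda>n r. cc C n (psub r b)),
                    dd = (\<lambda>n r. dd C n (psub r b)),
                    mul = (\<lambda>i n r. mul C i n (psub r b)) \<rparr>"

definition ptr :: "nat \<times> nat \<Rightarrow> int \<times> int \<Rightarrow> int \<times> int" where
  "ptr t a = (min (fst a) (int (fst t)), min (snd a) (int (snd t)))"

definition pullback :: "nat \<times> nat \<Rightarrow> 'k::zero gcx \<Rightarrow> 'k gcx" where
  "pullback t C = \<lparr>
     cc = (\<lambda>n a. if nonneg a then cc C n (ptr t a) else {zv}),
     dd = (\<lambda>n a v. if nonneg a then dd C n (ptr t a) v else zv),
     mul = (\<lambda>i n a v. if nonneg a then
                         (if ptr t (padd a (eps i)) = ptr t a then v else mul C i n (ptr t a) v)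
                       else zv) \<rparr>"

text \<open>N^{eps_j}_t(C) = p_t^* Hom_S(P_{(t_j+1) eps_j}, C(-eps_j))\<close>
definition tcomp :: "nat \<times> nat \<Rightarrow> nat \<Rightarrow> nat" where
  "tcomp t j = (if j = 1 then fst t else snd t)"

definition nak1 :: "nat \<Rightarrow> nat \<times> nat \<Rightarrow> 'k::comm_ring_1 gcx \<Rightarrow> 'k gcx" where
  "nak1 j t C = pullback t (homP j (tcomp t j + 1) (twistneg C (eps j)))"

definition nak :: "nat \<times> nat \<Rightarrow> nat \<times> nat \<Rightarrow> 'k::comm_ring_1 gcx \<Rightarrow> 'k gcx" where
  "nak t k C = ((nak1 1 t) ^^ (fst k)) (((nak1 2 t) ^^ (snd k)) C)"

text \<open>Monomial ideals of K[x,y], represented by the (upward closed) set of exponent vectors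
  of the monomials they contain.\<close>
definition monomial_ideal :: "(nat \<times> nat) set \<Rightarrow> bool" where
  "monomial_ideal I \<longleftrightarrow> (\<forall>a\<in>I. \<forall>b. nle a b \<longrightarrow> b \<in> I)"

definition min_gens :: "(nat \<times> nat) set \<Rightarrow> (nat \<times> nat) set" where
  "min_gens I = {m \<in> I. \<forall>b\<in>I. nle b m \<longrightarrow> b = m}"

definition pos_t_determined :: "nat \<times> nat \<Rightarrow> (nat \<times> nat) set \<Rightarrow> bool" where
  "pos_t_determined t I \<longleftrightarrow> (\<forall>m\<in>min_gens I. nle m t)"

text \<open>S/I as a complex concentrated in homological degree 0; (S/I)_a = K if a in N^2 and x^a notin I,
  and 0 otherwise\<close>
definition in_supp :: "(nat \<times> nat) set \<Rightarrow> int \<times> int \<Rightarrow> bool" where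
  "in_supp I a \<longleftrightarrow> nonneg a \<and> (nat (fst a), nat (snd a)) \<notin> I"

definition quot :: "(nat \<times> nat) set \<Rightarrow> 'k::zero gcx" where
  "quot I = \<lparr>
     cc = (\<lambda>n a. if n = 0 \<and> in_supp I a then range constv else {zv}),
     dd = (\<lambda>n a v. zv),
     mul = (\<lambda>i n a v. if n = 0 \<and> in_supp I a \<and> in_supp I (padd a (eps i)) then v else zv) \<rparr>"

definition homology_zero :: "'k::zero gcx \<Rightarrow> int \<Rightarrow> bool" where
  "homology_zero C i \<longleftrightarrow>
     (\<forall>a. \<forall>z\<in>cc C i a. dd C i a z = zv \<longrightarrow> (\<exists>b\<in>cc C (i+1) a. dd C (i+1) a b = z))"

definition cohomology_zero :: "'k::zero gcx \<Rightarrow> int \<Rightarrow> bool" where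
  "cohomology_zero C i \<longleftrightarrow> homology_zero C (- i)"

end

theory Submission
  imports Defs
begin

definition restr :: "bool list set \<Rightarrow> 'k::zero vec \<Rightarrow> 'k vec" where
  "restr S v = (\<lambda>l. if l \<in> S then v l else 0)"

definition cntT :: "bool list \<Rightarrow> nat" where "cntT l = length (filter id l)"

definition Tpos :: "bool list \<Rightarrow> nat set" where "Tpos l = {j. j < length l \<and> l ! j}"

definition sg :: "int \<Rightarrow> bool list \<Rightarrow> nat \<Rightarrow> 'k::comm_ring_1" where
  "sg n l j = (if even (n + int (cntT (take j l))) then -1 else 1)"

definition ddf :: "(int \<Rightarrow> int \<times> int \<Rightarrow> bool list set) \<Rightarrow> int \<Rightarrow> int \<times> int \<Rightarrow> 'k::comm_ring_1 vec \<Rightarrow> 'k vec" where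
  "ddf S n a v = (\<lambda>l. if l \<in> S (n-1) a then (\<Sum>j\<in>Tpos l. sg n l j * v (l[j:=False])) else 0)"

definition good :: "'k::comm_ring_1 gcx \<Rightarrow> (int \<Rightarrow> int \<times> int \<Rightarrow> bool list set) \<Rightarrow> bool" where
"good D S \<longleftrightarrow>
 (\<forall>n a. cc D n a = {v. \<forall>l. v l \<noteq> 0 \<longrightarrow> l \<in> S n a}) \<and>
 (\<forall>n a. \<not> nonneg a \<longrightarrow> S n a = {}) \<and>
 (\<forall>n b i l m m'. nonneg b \<longrightarrow> m' \<le> m \<longrightarrow> l \<in> S n b \<longrightarrow> l \<in> S n (padd b (psc (int m) (eps i)))
     \<longrightarrow> l \<in> S n (padd b (psc (int m') (eps i)))) \<and>
 (\<forall>i n a v. v \<in> cc D n a \<longrightarrow> mul D i n a v = restr (S n (padd a (eps i))) v) \<and>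
 (\<forall>n a v. v \<in> cc D n a \<longrightarrow> dd D n a v = ddf S n a v)"

definition NS :: "nat \<Rightarrow> nat \<times> nat \<Rightarrow> (int \<Rightarrow> int \<times> int \<Rightarrow> bool list set) \<Rightarrow> int \<Rightarrow> int \<times> int \<Rightarrow> bool list set" where
  "NS j t S n a = (if nonneg a then Cons False ` S n (psub (ptr t a) (eps j))
       \<union> Cons True ` S (n+1) (padd (ptr t a) (psc (int (tcomp t j)) (eps j))) else {})"

definition SQ :: "(nat \<times> nat) set \<Rightarrow> int \<Rightarrow> int \<times> int \<Rightarrow> bool list set" where
  "SQ I n a = (if n = 0 \<and> in_supp I a then {[]} else {})"

lemma good_cc: "good D S \<Longrightarrow> cc D n a = {v. \<forall>l. v l \<noteq> 0 \<longrightarrow> l \<in> S n a}"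
  unfolding good_def by blast
lemma good_empty: "good D S \<Longrightarrow> \<not> nonneg a \<Longrightarrow> S n a = {}"
  unfolding good_def by blast
lemma good_conv: "good D S \<Longrightarrow> nonneg b \<Longrightarrow> m' \<le> m \<Longrightarrow> l \<in> S n b \<Longrightarrow> l \<in> S n (padd b (psc (int m) (eps i)))
     \<Longrightarrow> l \<in> S n (padd b (psc (int m') (eps i)))"
  unfolding good_def by blast
lemma good_mul: "good D S \<Longrightarrow> v \<in> cc D n a \<Longrightarrow> mul D i n a v = restr (S n (padd a (eps i))) v"
  unfolding good_def by blast
lemma good_dd: "good D S \<Longrightarrow> v \<in> cc D n a \<Longrightarrow> dd D n a v = ddf S n a v"
  unfolding good_def by blast

lemma good_nonneg: "good D S \<Longrightarrow> l \<in> S n a \<Longrightarrow> nonneg a"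
  using good_empty by blast

lemma mulpow_twist: "mulpow (twistneg D e) j n r m v = mulpow D j n (psub r e) m v"
proof (induction m)
  case 0 then show ?case by simp
next
  case (Suc m)
  have "psub (padd r (psc (int m) (eps j))) e = padd (psub r e) (psc (int m) (eps j))"
    by (simp add: psub_def padd_def)
  then show ?case using Suc by (simp add: twistneg_def)
qed

lemma mulpow_restr:
  assumes g: "good D S" and v: "v \<in> cc D n b"
  shows "mulpow D j n b m v = restr {l. \<forall>i\<le>m. l \<in> S n (padd b (psc (int i) (eps j)))} v
         \<and> mulpow D j n b m v \<in> cc D n (padd b (psc (int m) (eps j)))"
proof (induction m)
  case 0
  have pb: "padd b (psc 0 (eps j)) = b" by (simp add: padd_def psc_def)
  have "restr {l. \<forall>i\<le>0::nat. l \<in> S n (padd b (psc (int i) (eps j)))} v = v"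
    using v g pb by (auto simp: restr_def good_cc[OF g] fun_eq_iff)
  then show ?case using v pb by simp
next
  case (Suc m)
  let ?w = "mulpow D j n b m v"
  have w: "?w \<in> cc D n (padd b (psc (int m) (eps j)))" using Suc by blast
  have pe: "padd (padd b (psc (int m) (eps j))) (eps j) = padd b (psc (int (Suc m)) (eps j))"
    by (simp add: padd_def psc_def algebra_simps)
  have eq: "mulpow D j n b (Suc m) v = restr (S n (padd b (psc (int (Suc m)) (eps j)))) ?w"
    using good_mul[OF g w, of j] pe by simp
  have "restr (S n (padd b (psc (int (Suc m)) (eps j)))) ?w
       = restr {l. \<forall>i\<le>Suc m. l \<in> S n (padd b (psc (int i) (eps j)))} v"
    using Suc by (auto simp: restr_def fun_eq_iff le_Suc_eq)
  moreover have "restr (S n (padd b (psc (int (Suc m)) (eps j)))) ?w \<in> cc D n (padd b (psc (int (Suc m)) (eps j)))"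
    by (auto simp: good_cc[OF g] restr_def)
  ultimately show ?case using eq by simp
qed

lemma mulpow_good:
  assumes g: "good D S" and v: "v \<in> cc D n b"
  shows "mulpow D j n b m v = restr (S n (padd b (psc (int m) (eps j)))) v"
proof -
  have "restr {l. \<forall>i\<le>m. l \<in> S n (padd b (psc (int i) (eps j)))} v = restr (S n (padd b (psc (int m) (eps j)))) v"
  proof (rule ext)
    fix l
    show "restr {l. \<forall>i\<le>m. l \<in> S n (padd b (psc (int i) (eps j)))} v l = restr (S n (padd b (psc (int m) (eps j)))) v l"
    proof (cases "v l = 0")
      case True then show ?thesis by (simp add: restr_def)
    next
      case False
      then have lb: "l \<in> S n b" using v good_cc[OF g] by blast
      have nb: "nonneg b" using good_nonneg[OF g lb] .
      have pb: "padd b (psc 0 (eps j)) = b" by (simp add: padd_def psc_def)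
      { assume lm: "l \<in> S n (padd b (psc (int m) (eps j)))"
        have "\<forall>i\<le>m. l \<in> S n (padd b (psc (int i) (eps j)))"
          using good_conv[OF g nb _ lb lm] by blast }
      then show ?thesis by (auto simp: restr_def)
    qed
  qed
  then show ?thesis using mulpow_restr[OF g v] by simp
qed



lemma shift_eq: "psub (padd r (psc (int (s+1)) e)) e = padd r (psc (int s) e)"
  by (simp add: psub_def padd_def psc_def algebra_simps)
lemma shift_eq': "psub (padd r (psc (1 + int s) e)) e = padd r (psc (int s) e)"
  by (simp add: psub_def padd_def psc_def algebra_simps)

lemma cc_nak1:
  fixes D :: "'k::comm_ring_1 gcx"
  assumes g: "good D S"
  shows "cc (nak1 j t D) n a = {v. \<forall>l. v l \<noteq> 0 \<longrightarrow> l \<in> NS j t S n a}"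
proof (cases "nonneg a")
  case False
  then show ?thesis by (auto simp: nak1_def pullback_def NS_def zv_def fun_eq_iff)
next
  case True
  let ?r1 = "psub (ptr t a) (eps j)"
  let ?r2 = "padd (ptr t a) (psc (int (tcomp t j)) (eps j))"
  have c: "cc (nak1 j t D) n a = {pr u w |u w. u \<in> cc D n ?r1 \<and> w \<in> cc D (n+1) ?r2}"
    using True by (simp add: nak1_def pullback_def homP_def twistneg_def shift_eq')
  show ?thesis unfolding c
  proof (intro set_eqI iffI)
    fix v :: "'k vec" assume "v \<in> {pr u w |u w. u \<in> cc D n ?r1 \<and> w \<in> cc D (n+1) ?r2}"
    then obtain u w where v: "v = pr u w" and u: "u \<in> cc D n ?r1" and w: "w \<in> cc D (n+1) ?r2" by blast
    show "v \<in> {v. \<forall>l. v l \<noteq> 0 \<longrightarrow> l \<in> NS j t S n a}"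
    proof (intro CollectI allI impI)
      fix l assume "v l \<noteq> 0"
      then show "l \<in> NS j t S n a" using u w True unfolding v
        by (cases l) (auto simp: pr_def NS_def good_cc[OF g] split: if_splits)
    qed
  next
    fix v :: "'k vec" assume v: "v \<in> {v. \<forall>l. v l \<noteq> 0 \<longrightarrow> l \<in> NS j t S n a}"
    have "v = pr (fstv v) (sndv v)"
    proof (rule ext)
      fix l show "v l = pr (fstv v) (sndv v) l"
      proof (cases l)
        case Nil
        have "v [] = 0"
        proof (rule ccontr)
          assume "v [] \<noteq> 0"
          then have "[] \<in> NS j t S n a" using v by blast
          then show False by (auto simp: NS_def split: if_splits)
        qed
        then show ?thesis using Nil by (simp add: pr_def)
      next
        case (Cons b l') then show ?thesis by (cases b) (auto simp: pr_def fstv_def sndv_def)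
      qed
    qed
    moreover have "fstv v \<in> cc D n ?r1" using v True by (auto simp: good_cc[OF g] fstv_def NS_def)
    moreover have "sndv v \<in> cc D (n+1) ?r2" using v True by (auto simp: good_cc[OF g] sndv_def NS_def)
    ultimately show "v \<in> {pr u w |u w. u \<in> cc D n ?r1 \<and> w \<in> cc D (n+1) ?r2}" by blast
  qed
qed



lemma nonneg_padd_eps: "nonneg a \<Longrightarrow> nonneg (padd a (eps i))"
  by (simp add: nonneg_def padd_def eps_def)

lemma ptr_step: "ptr t (padd a (eps i)) \<noteq> ptr t a \<Longrightarrow> ptr t (padd a (eps i)) = padd (ptr t a) (eps i)"
  by (auto simp: ptr_def padd_def eps_def split: if_splits)

lemma cc_nak1_supp:
  fixes D :: "'k::comm_ring_1 gcx"
  assumes g: "good D S" and v: "v \<in> cc (nak1 j t D) n a"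
  shows "v l \<noteq> 0 \<Longrightarrow> l \<in> NS j t S n a"
  using v cc_nak1[OF g] by blast

lemma restr_self: "(\<And>l. v l \<noteq> 0 \<Longrightarrow> l \<in> A) \<Longrightarrow> restr A v = v"
  by (auto simp: restr_def fun_eq_iff)

lemma mul_nak1:
  fixes D :: "'k::comm_ring_1 gcx"
  assumes g: "good D S" and v: "v \<in> cc (nak1 j t D) n a"
  shows "mul (nak1 j t D) i n a v = restr (NS j t S n (padd a (eps i))) v"
proof (cases "nonneg a")
  case False
  then have "v = zv" using v cc_nak1[OF g] by (auto simp: NS_def zv_def fun_eq_iff)
  then show ?thesis using False by (simp add: nak1_def pullback_def restr_def zv_def fun_eq_iff)
next
  case True
  have nn: "nonneg (padd a (eps i))" using nonneg_padd_eps[OF True] .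
  let ?r1 = "psub (ptr t a) (eps j)"
  let ?r2 = "padd (ptr t a) (psc (int (tcomp t j)) (eps j))"
  show ?thesis
  proof (cases "ptr t (padd a (eps i)) = ptr t a")
    case True2: True
    have "NS j t S n (padd a (eps i)) = NS j t S n a" using nn True True2 by (simp add: NS_def)
    then have "restr (NS j t S n (padd a (eps i))) v = v"
      using restr_self[of v] cc_nak1_supp[OF g v] by metis
    then show ?thesis using True True2 by (simp add: nak1_def pullback_def)
  next
    case False2: False
    have pe: "ptr t (padd a (eps i)) = padd (ptr t a) (eps i)" using ptr_step[OF False2] .
    have u: "fstv v \<in> cc D n ?r1" using v True by (auto simp: cc_nak1[OF g] good_cc[OF g] fstv_def NS_def)
    have w: "sndv v \<in> cc D (n+1) ?r2" using v True by (auto simp: cc_nak1[OF g] good_cc[OF g] sndv_def NS_def)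
    have m: "mul (nak1 j t D) i n a v = pr (mul D i n ?r1 (fstv v)) (mul D i (n+1) ?r2 (sndv v))"
      using True False2 by (simp add: nak1_def pullback_def homP_def twistneg_def shift_eq')
    have e1: "padd ?r1 (eps i) = psub (ptr t (padd a (eps i))) (eps j)"
      using pe by (simp add: padd_def psub_def)
    have e2: "padd ?r2 (eps i) = padd (ptr t (padd a (eps i))) (psc (int (tcomp t j)) (eps j))"
      using pe by (simp add: padd_def)
    show ?thesis unfolding m good_mul[OF g u] good_mul[OF g w] e1 e2
    proof (rule ext)
      fix l show "pr (restr (S n (psub (ptr t (padd a (eps i))) (eps j))) (fstv v))
          (restr (S (n + 1) (padd (ptr t (padd a (eps i))) (psc (int (tcomp t j)) (eps j)))) (sndv v)) l =
         restr (NS j t S n (padd a (eps i))) v l"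
      proof (cases l)
        case Nil then show ?thesis using cc_nak1_supp[OF g v, of l] True
          by (auto simp: pr_def restr_def NS_def)
      next
        case (Cons b l') then show ?thesis using nn
          by (cases b) (auto simp: pr_def restr_def NS_def fstv_def sndv_def)
      qed
    qed
  qed
qed



lemma nonneg_padd_psc: "nonneg b \<Longrightarrow> nonneg (padd b (psc (int m) (eps i)))"
  by (simp add: nonneg_def padd_def psc_def eps_def)

lemma ptr_seg:
  assumes "m' \<le> m"
  shows "\<exists>\<mu> \<mu>'. \<mu>' \<le> \<mu> \<and> ptr t (padd b (psc (int m) (eps i))) = padd (ptr t b) (psc (int \<mu>) (eps i))
     \<and> ptr t (padd b (psc (int m') (eps i))) = padd (ptr t b) (psc (int \<mu>') (eps i))"
proof -
  consider "i = 1" | "i = 2" | "i \<noteq> 1 \<and> i \<noteq> 2" by blast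
  then show ?thesis
  proof cases
    case 1
    let ?f = "\<lambda>x::nat. nat (min (fst b + int x) (int (fst t)) - min (fst b) (int (fst t)))"
    have "?f m' \<le> ?f m" using assms by (intro nat_mono) linarith
    then show ?thesis using 1
      by (intro exI[of _ "?f m"] exI[of _ "?f m'"]) (auto simp: ptr_def padd_def psc_def eps_def)
  next
    case 2
    let ?f = "\<lambda>x::nat. nat (min (snd b + int x) (int (snd t)) - min (snd b) (int (snd t)))"
    have "?f m' \<le> ?f m" using assms by (intro nat_mono) linarith
    then show ?thesis using 2
      by (intro exI[of _ "?f m"] exI[of _ "?f m'"]) (auto simp: ptr_def padd_def psc_def eps_def)
  next
    case 3
    then show ?thesis
      by (intro exI[of _ 0] exI[of _ 0]) (auto simp: ptr_def padd_def psc_def eps_def)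
  qed
qed

lemma conv_NS:
  assumes g: "good D S" and nb: "nonneg b" and mm: "m' \<le> m"
    and l1: "l \<in> NS j t S n b" and l2: "l \<in> NS j t S n (padd b (psc (int m) (eps i)))"
  shows "l \<in> NS j t S n (padd b (psc (int m') (eps i)))"
proof -
  obtain \<mu> \<mu>' where mu: "\<mu>' \<le> \<mu>" and p1: "ptr t (padd b (psc (int m) (eps i))) = padd (ptr t b) (psc (int \<mu>) (eps i))"
     and p2: "ptr t (padd b (psc (int m') (eps i))) = padd (ptr t b) (psc (int \<mu>') (eps i))"
    using ptr_seg[OF mm] by blast
  have nm: "nonneg (padd b (psc (int m) (eps i)))" "nonneg (padd b (psc (int m') (eps i)))"
    using nonneg_padd_psc[OF nb] by auto
  have A1: "psub (padd x y) z = padd (psub x z) y" for x y z :: "int \<times> int" by (simp add: psub_def padd_def)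
  have A2: "padd (padd x y) z = padd (padd x z) y" for x y z :: "int \<times> int" by (simp add: padd_def)
  let ?r1 = "psub (ptr t b) (eps j)"
  let ?r2 = "padd (ptr t b) (psc (int (tcomp t j)) (eps j))"
  show ?thesis
  proof (cases l)
    case Nil then show ?thesis using l1 by (auto simp: NS_def split: if_splits)
  next
    case (Cons c l')
    show ?thesis
    proof (cases c)
      case False
      have a: "l' \<in> S n ?r1" using l1 nb Cons False by (auto simp: NS_def)
      have b: "l' \<in> S n (padd ?r1 (psc (int \<mu>) (eps i)))" using l2 nm Cons False p1 by (auto simp: NS_def A1)
      have "l' \<in> S n (padd ?r1 (psc (int \<mu>') (eps i)))"
        using good_conv[OF g good_nonneg[OF g a] mu a b] .
      then show ?thesis using nm Cons False p2 by (auto simp: NS_def A1)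
    next
      case True
      have a: "l' \<in> S (n+1) ?r2" using l1 nb Cons True by (auto simp: NS_def)
      have b: "l' \<in> S (n+1) (padd ?r2 (psc (int \<mu>) (eps i)))" using l2 nm Cons True p1 by (auto simp: NS_def A2)
      have "l' \<in> S (n+1) (padd ?r2 (psc (int \<mu>') (eps i)))"
        using good_conv[OF g good_nonneg[OF g a] mu a b] .
      then show ?thesis using nm Cons True p2 by (auto simp: NS_def A2)
    qed
  qed
qed



lemma Tpos_Nil[simp]: "Tpos [] = {}" by (simp add: Tpos_def)
lemma Tpos_False[simp]: "Tpos (False # l) = Suc ` Tpos l"
  apply (rule set_eqI) subgoal for x by (cases x) (auto simp: Tpos_def) done
lemma Tpos_True[simp]: "Tpos (True # l) = insert 0 (Suc ` Tpos l)"
  apply (rule set_eqI) subgoal for x by (cases x) (auto simp: Tpos_def) done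
lemma finite_Tpos[simp]: "finite (Tpos l)" by (simp add: Tpos_def)

lemma sg_False_Suc[simp]: "sg n (False#l) (Suc j) = sg n l j" by (simp add: sg_def cntT_def)
lemma sg_True_Suc[simp]: "sg n (True#l) (Suc j) = sg (n+1) l j"
proof -
  have "n + int (Suc c) = (n+1) + int c" for c by simp
  then show ?thesis by (simp add: sg_def cntT_def)
qed
lemma sg_True_0[simp]: "sg n (True#l) 0 = (if even n then -1 else 1)" by (simp add: sg_def cntT_def)

lemma dd_nak1:
  fixes D :: "'k::comm_ring_1 gcx"
  assumes g: "good D S" and v: "v \<in> cc (nak1 j t D) n a"
  shows "dd (nak1 j t D) n a v = ddf (NS j t S) n a v"
proof (cases "nonneg a")
  case False
  then show ?thesis by (auto simp: nak1_def pullback_def ddf_def NS_def zv_def fun_eq_iff)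
next
  case True
  let ?r1 = "psub (ptr t a) (eps j)"
  let ?r2 = "padd (ptr t a) (psc (int (tcomp t j)) (eps j))"
  have u: "fstv v \<in> cc D n ?r1" using v True by (auto simp: cc_nak1[OF g] good_cc[OF g] fstv_def NS_def)
  have w: "sndv v \<in> cc D (n+1) ?r2" using v True by (auto simp: cc_nak1[OF g] good_cc[OF g] sndv_def NS_def)
  have ar: "padd ?r1 (psc (int (tcomp t j + 1)) (eps j)) = ?r2" by (simp add: padd_def psub_def psc_def algebra_simps)
  have mp: "mulpow D j n ?r1 (tcomp t j + 1) (fstv v) = restr (S n ?r2) (fstv v)"
    using mulpow_good[OF g u, of j "tcomp t j + 1"] ar by simp
  have m: "dd (nak1 j t D) n a v = pr (dd D n ?r1 (fstv v))
             (vsub (dd D (n+1) ?r2 (sndv v))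
               (if even n then restr (S n ?r2) (fstv v) else vneg (restr (S n ?r2) (fstv v))))"
  proof -
    have mp2: "mulpow (twistneg D (eps j)) j n (ptr t a) (tcomp t j + 1) (fstv v) = restr (S n ?r2) (fstv v)"
      using mp by (simp only: mulpow_twist)
    have "dd (nak1 j t D) n a v = pr (dd (twistneg D (eps j)) n (ptr t a) (fstv v))
             (vsub (dd (twistneg D (eps j)) (n+1) (padd (ptr t a) (psc (int (tcomp t j + 1)) (eps j))) (sndv v))
               (if even n then mulpow (twistneg D (eps j)) j n (ptr t a) (tcomp t j + 1) (fstv v)
                else vneg (mulpow (twistneg D (eps j)) j n (ptr t a) (tcomp t j + 1) (fstv v))))"
      using True unfolding nak1_def pullback_def homP_def by (simp only: gcx.simps if_True)
    then show ?thesis unfolding mp2 by (simp add: twistneg_def shift_eq')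
  qed
  show ?thesis unfolding m good_dd[OF g u] good_dd[OF g w]
  proof (rule ext)
    fix l
    show "pr (ddf S n ?r1 (fstv v))
             (vsub (ddf S (n+1) ?r2 (sndv v))
               (if even n then restr (S n ?r2) (fstv v) else vneg (restr (S n ?r2) (fstv v)))) l
          = ddf (NS j t S) n a v l"
    proof (cases l)
      case Nil then show ?thesis by (simp add: pr_def ddf_def NS_def)
    next
      case (Cons b l')
      show ?thesis
      proof (cases b)
        case False
        have "(\<Sum>i\<in>Suc ` Tpos l'. sg n (False # l') i * v ((False # l')[i := False]))
             = (\<Sum>i\<in>Tpos l'. sg n l' i * fstv v (l'[i := False]))"
          by (subst sum.reindex) (auto simp: fstv_def)
        then show ?thesis using Cons False True by (simp add: pr_def ddf_def NS_def image_iff)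
      next
        case b: True
        have s1: "(\<Sum>i\<in>insert 0 (Suc ` Tpos l'). sg n (True # l') i * v ((True # l')[i := False]))
          = sg n (True # l') 0 * v (False # l') + (\<Sum>i\<in>Tpos l'. sg (n+1) l' i * sndv v (l'[i := False]))"
          by (subst sum.insert) (auto simp: sum.reindex sndv_def)
        show ?thesis
        proof (cases "l' \<in> S n ?r2")
          case False
          then show ?thesis using Cons b True
            by (simp add: pr_def ddf_def NS_def image_iff vsub_def restr_def vneg_def)
        next
          case in2: True
          have L: "pr (ddf S n ?r1 (fstv v))
             (vsub (ddf S (n+1) ?r2 (sndv v))
               (if even n then restr (S n ?r2) (fstv v) else vneg (restr (S n ?r2) (fstv v)))) l
             = (\<Sum>i\<in>Tpos l'. sg (n+1) l' i * sndv v (l'[i := False])) - (if even n then v (False # l') else - v (False # l'))"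
            using Cons b in2 by (simp add: pr_def ddf_def vsub_def restr_def vneg_def fstv_def)
          have R: "ddf (NS j t S) n a v l = sg n (True # l') 0 * v (False # l') + (\<Sum>i\<in>Tpos l'. sg (n+1) l' i * sndv v (l'[i := False]))"
            using Cons b in2 True s1 by (simp add: ddf_def NS_def)
          show ?thesis unfolding L R by simp
        qed
      qed
    qed
  qed
qed

lemma good_nak1:
  fixes D :: "'k::comm_ring_1 gcx"
  assumes g: "good D S"
  shows "good (nak1 j t D) (NS j t S)"
  unfolding good_def
proof (intro conjI allI impI)
  fix n a show "cc (nak1 j t D) n a = {v. \<forall>l. v l \<noteq> 0 \<longrightarrow> l \<in> NS j t S n a}" using cc_nak1[OF g] .
next
  fix n a assume "\<not> nonneg a" then show "NS j t S n a = {}" by (simp add: NS_def)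
next
  fix n b i l m m' assume "nonneg b" "m' \<le> m" "l \<in> NS j t S n b" "l \<in> NS j t S n (padd b (psc (int m) (eps i)))"
  then show "l \<in> NS j t S n (padd b (psc (int m') (eps i)))" using conv_NS[OF g] by blast
next
  fix i n a v assume "v \<in> cc (nak1 j t D) n a"
  then show "mul (nak1 j t D) i n a v = restr (NS j t S n (padd a (eps i))) v" using mul_nak1[OF g] by blast
next
  fix n a v assume "v \<in> cc (nak1 j t D) n a"
  then show "dd (nak1 j t D) n a v = ddf (NS j t S) n a v" using dd_nak1[OF g] by blast
qed

lemma good_funpow:
  fixes D :: "'k::comm_ring_1 gcx"
  assumes g: "good D S"
  shows "good (((nak1 j t)^^m) D) (((NS j t)^^m) S)"
  by (induction m) (auto simp: g good_nak1)



lemma in_supp_down: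
  assumes I: "monomial_ideal I" and b: "in_supp I b" and a: "nonneg a" and ab: "ple a b"
  shows "in_supp I a"
proof -
  have "(nat (fst a), nat (snd a)) \<notin> I"
  proof
    assume "(nat (fst a), nat (snd a)) \<in> I"
    moreover have "nle (nat (fst a), nat (snd a)) (nat (fst b), nat (snd b))"
      using ab a by (auto simp: nle_def ple_def nonneg_def)
    ultimately have "(nat (fst b), nat (snd b)) \<in> I" using I unfolding monomial_ideal_def by blast
    then show False using b by (simp add: in_supp_def)
  qed
  then show ?thesis using a by (simp add: in_supp_def)
qed

lemma ptr_le: "nonneg a \<Longrightarrow> nonneg (ptr t a) \<and> ple (ptr t a) a"
  by (auto simp: ptr_def nonneg_def ple_def)

lemma tdet:
  assumes I: "monomial_ideal I" and P: "pos_t_determined t I" and a: "nonneg a"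
  shows "in_supp I (ptr t a) = in_supp I a"
proof
  assume "in_supp I a" then show "in_supp I (ptr t a)" using in_supp_down[OF I] ptr_le[OF a] by blast
next
  assume h: "in_supp I (ptr t a)"
  let ?x = "(nat (fst a), nat (snd a))"
  show "in_supp I a"
  proof (rule ccontr)
    assume "\<not> in_supp I a"
    then have xI: "?x \<in> I" using a by (simp add: in_supp_def)
    let ?P = "\<lambda>m. m \<in> I \<and> nle m ?x"
    obtain m where m: "?P m" and mmin: "\<And>y. ?P y \<Longrightarrow> fst m + snd m \<le> fst y + snd y"
      using ex_has_least_nat[of ?P ?x "\<lambda>m. fst m + snd m"] xI by (auto simp: nle_def)
    have "m \<in> min_gens I"
      unfolding min_gens_def
    proof (intro CollectI conjI ballI impI)
      show "m \<in> I" using m by blast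
      fix b assume bI: "b \<in> I" and bm: "nle b m"
      have "nle b ?x" using bm m by (auto simp: nle_def)
      then have "fst m + snd m \<le> fst b + snd b" using mmin bI by blast
      then show "b = m" using bm by (auto simp: nle_def prod_eq_iff)
    qed
    then have "nle m t" using P by (simp add: pos_t_determined_def)
    then have "nle m (nat (fst (ptr t a)), nat (snd (ptr t a)))" using m a
      by (auto simp: nle_def ptr_def nonneg_def)
    then have "(nat (fst (ptr t a)), nat (snd (ptr t a))) \<in> I" using I m unfolding monomial_ideal_def by blast
    then show False using h by (simp add: in_supp_def)
  qed
qed

lemma good_quot:
  fixes I :: "(nat \<times> nat) set"
  assumes I: "monomial_ideal I"
  shows "good (quot I :: 'k::comm_ring_1 gcx) (SQ I)"
  unfolding good_def
proof (intro conjI allI impI)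
  fix n a
  show "cc (quot I :: 'k gcx) n a = {v. \<forall>l. v l \<noteq> 0 \<longrightarrow> l \<in> SQ I n a}"
  proof (cases "n = 0 \<and> in_supp I a")
    case True
    have "range constv = {v::'k vec. \<forall>l. v l \<noteq> 0 \<longrightarrow> l = []}"
    proof (intro set_eqI iffI)
      fix v :: "'k vec" assume "v \<in> range constv" then show "v \<in> {v. \<forall>l. v l \<noteq> 0 \<longrightarrow> l = []}"
        by (auto simp: constv_def split: if_splits)
    next
      fix v :: "'k vec" assume "v \<in> {v. \<forall>l. v l \<noteq> 0 \<longrightarrow> l = []}"
      then have "v = constv (v [])" by (auto simp: constv_def fun_eq_iff)
      then show "v \<in> range constv" by blast
    qed
    then show ?thesis using True by (simp add: quot_def SQ_def)
  next
    case False
    then show ?thesis by (auto simp: quot_def SQ_def zv_def fun_eq_iff)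
  qed
next
  fix n a assume "\<not> nonneg a" then show "SQ I n a = {}" by (simp add: SQ_def in_supp_def)
next
  fix n b i l m m' assume nb: "nonneg b" and mm: "m' \<le> m" and l1: "l \<in> SQ I n b"
    and l2: "l \<in> SQ I n (padd b (psc (int m) (eps i)))"
  have "in_supp I (padd b (psc (int m') (eps i)))"
    using in_supp_down[OF I, of "padd b (psc (int m) (eps i))" "padd b (psc (int m') (eps i))"] l2 nb mm
    by (auto simp: SQ_def nonneg_def padd_def psc_def eps_def ple_def split: if_splits)
  then show "l \<in> SQ I n (padd b (psc (int m') (eps i)))" using l1 l2 by (auto simp: SQ_def split: if_splits)
next
  fix i n a and v :: "'k vec" assume v: "v \<in> cc (quot I) n a"
  show "mul (quot I) i n a v = restr (SQ I n (padd a (eps i))) v"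
    using v by (auto simp: quot_def SQ_def restr_def zv_def constv_def fun_eq_iff)
next
  fix n a and v :: "'k vec" assume v: "v \<in> cc (quot I) n a"
  show "dd (quot I) n a v = ddf (SQ I) n a v"
    by (auto simp: quot_def SQ_def ddf_def zv_def fun_eq_iff)
qed



fun okw :: "int \<Rightarrow> int \<Rightarrow> bool list \<Rightarrow> bool" where
  "okw T c [] = True"
| "okw T c (b # l) = (if b then okw T T l else (1 \<le> c \<and> okw T (c-1) l))"

fun endw :: "int \<Rightarrow> int \<Rightarrow> bool list \<Rightarrow> int" where
  "endw T c [] = c"
| "endw T c (b # l) = (if b then endw T T l else endw T (c-1) l)"

lemma cntT_simps[simp]: "cntT [] = 0" "cntT (True # l) = Suc (cntT l)" "cntT (False # l) = cntT l"
  "cntT (xs @ ys) = cntT xs + cntT ys"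
  by (auto simp: cntT_def)

lemma S2_char:
  assumes I: "monomial_ideal I" and P: "pos_t_determined t I"
  shows "l \<in> ((NS 2 t)^^m) (SQ I) n a \<longleftrightarrow> nonneg a \<and> length l = m \<and> n + int (cntT l) = 0
     \<and> okw (int (snd t)) (min (snd a) (int (snd t))) l
     \<and> in_supp I (min (fst a) (int (fst t)), endw (int (snd t)) (min (snd a) (int (snd t))) l)"
proof (induction m arbitrary: l n a)
  case 0
  have "nonneg a \<Longrightarrow> in_supp I (min (fst a) (int (fst t)), min (snd a) (int (snd t))) = in_supp I a"
    using tdet[OF I P, of a] by (simp add: ptr_def)
  then show ?case by (auto simp: SQ_def in_supp_def)
next
  case (Suc m)
  let ?X = "((NS 2 t)^^m) (SQ I)"
  let ?d = "min (fst a) (int (fst t))" and ?c = "min (snd a) (int (snd t))" and ?T = "int (snd t)"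
  have ns: "l \<in> ((NS 2 t)^^Suc m) (SQ I) n a \<longleftrightarrow> nonneg a \<and> ((\<exists>l'. l = False#l' \<and> l' \<in> ?X n (?d, ?c - 1))
        \<or> (\<exists>l'. l = True#l' \<and> l' \<in> ?X (n+1) (?d, ?c + ?T)))"
    by (auto simp: NS_def ptr_def psub_def padd_def psc_def eps_def tcomp_def)
  show ?case
  proof (cases l)
    case Nil then show ?thesis unfolding ns by simp
  next
    case (Cons b l')
    show ?thesis
    proof (cases b)
      case False
      have "?d \<le> int (fst t)" "?c \<le> ?T" by auto
      then show ?thesis unfolding ns Suc.IH using Cons False
        by (auto simp: nonneg_def min_absorb1)
    next
      case True
      then show ?thesis unfolding ns Suc.IH using Cons
        by (auto simp: nonneg_def min_absorb1 algebra_simps)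
    qed
  qed
qed



lemma endw_le: "c \<le> T \<Longrightarrow> endw T c l \<le> T"
  by (induction l arbitrary: c) auto

lemma S1_char:
  assumes I: "monomial_ideal I" and P: "pos_t_determined t I"
  shows "l \<in> ((NS 1 t)^^m) (((NS 2 t)^^m2) (SQ I)) n a \<longleftrightarrow> nonneg a \<and>
     (\<exists>l1 l2. l = l1 @ l2 \<and> length l1 = m \<and> okw (int (fst t)) (min (fst a) (int (fst t))) l1
        \<and> l2 \<in> ((NS 2 t)^^m2) (SQ I) (n + int (cntT l1)) (endw (int (fst t)) (min (fst a) (int (fst t))) l1, min (snd a) (int (snd t))))"
proof (induction m arbitrary: l n a)
  case 0
  show ?case unfolding funpow_0 S2_char[OF I P] by (auto simp: nonneg_def)
next
  case (Suc m)
  let ?X = "((NS 1 t)^^m) (((NS 2 t)^^m2) (SQ I))"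
  let ?B = "((NS 2 t)^^m2) (SQ I)"
  let ?d = "min (fst a) (int (fst t))" and ?c = "min (snd a) (int (snd t))" and ?T = "int (fst t)"
  have ns: "l \<in> ((NS 1 t)^^Suc m) (((NS 2 t)^^m2) (SQ I)) n a \<longleftrightarrow> nonneg a \<and> ((\<exists>l'. l = False#l' \<and> l' \<in> ?X n (?d - 1, ?c))
        \<or> (\<exists>l'. l = True#l' \<and> l' \<in> ?X (n+1) (?d + ?T, ?c)))"
    by (auto simp: NS_def ptr_def psub_def padd_def psc_def eps_def tcomp_def)
  have m1: "min (?d - 1) ?T = ?d - 1" "min ?c (int (snd t)) = ?c" "min (?d + ?T) ?T = ?T" if "nonneg a"
    using that by (auto simp: nonneg_def)
  show ?case
  proof
    assume h: "l \<in> ((NS 1 t)^^Suc m) ?B n a"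
    have h': "nonneg a \<and> ((\<exists>l'. l = False#l' \<and> l' \<in> ?X n (?d - 1, ?c))
        \<or> (\<exists>l'. l = True#l' \<and> l' \<in> ?X (n+1) (?d + ?T, ?c)))" using h unfolding ns .
    then have na: "nonneg a" by (rule conjunct1)
    from h' consider (F) l' where "l = False#l'" "l' \<in> ?X n (?d - 1, ?c)"
      | (T) l' where "l = True#l'" "l' \<in> ?X (n+1) (?d + ?T, ?c)" by blast
    then show "nonneg a \<and> (\<exists>l1 l2. l = l1 @ l2 \<and> length l1 = Suc m \<and> okw ?T ?d l1
        \<and> l2 \<in> ?B (n + int (cntT l1)) (endw ?T ?d l1, ?c))"
    proof cases
      case F
      have F2: "nonneg (?d - 1, ?c) \<and> (\<exists>l1 l2. l' = l1 @ l2 \<and> length l1 = m \<and> okw ?T (?d - 1) l1 \<and>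
        l2 \<in> ?B (n + int (cntT l1)) (endw ?T (?d - 1) l1, ?c))"
        using F(2) unfolding Suc.IH fst_conv snd_conv m1[OF na] .
      then obtain l1 l2 where "nonneg (?d - 1, ?c)" "l' = l1 @ l2" "length l1 = m" "okw ?T (?d - 1) l1"
        "l2 \<in> ?B (n + int (cntT l1)) (endw ?T (?d - 1) l1, ?c)" by blast
      then show ?thesis using na F(1)
        by (intro conjI exI[of _ "False # l1"] exI[of _ l2]) (auto simp: nonneg_def)
    next
      case T
      have T2: "nonneg (?d + ?T, ?c) \<and> (\<exists>l1 l2. l' = l1 @ l2 \<and> length l1 = m \<and> okw ?T ?T l1 \<and>
        l2 \<in> ?B (n + 1 + int (cntT l1)) (endw ?T ?T l1, ?c))"
        using T(2) unfolding Suc.IH fst_conv snd_conv m1[OF na] .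
      then obtain l1 l2 where "l' = l1 @ l2" "length l1 = m" "okw ?T ?T l1"
        "l2 \<in> ?B (n + 1 + int (cntT l1)) (endw ?T ?T l1, ?c)" by blast
      then show ?thesis using na T(1)
        by (intro conjI exI[of _ "True # l1"] exI[of _ l2]) (auto simp: algebra_simps)
    qed
  next
    assume h: "nonneg a \<and> (\<exists>l1 l2. l = l1 @ l2 \<and> length l1 = Suc m \<and> okw ?T ?d l1
        \<and> l2 \<in> ?B (n + int (cntT l1)) (endw ?T ?d l1, ?c))"
    then have na: "nonneg a" by blast
    from h obtain l1' l2 where l': "l = l1' @ l2" and len': "length l1' = Suc m" and ok': "okw ?T ?d l1'"
      and l2': "l2 \<in> ?B (n + int (cntT l1')) (endw ?T ?d l1', ?c)" by blast
    from len' obtain x l1 where x: "l1' = x # l1" by (cases l1') auto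
    have l: "l = (x # l1) @ l2" and len: "length l1 = m" and ok: "okw ?T ?d (x # l1)"
      and l2: "l2 \<in> ?B (n + int (cntT (x # l1))) (endw ?T ?d (x # l1), ?c)"
      using l' len' ok' l2' x by auto
    show "l \<in> ((NS 1 t)^^Suc m) ?B n a"
    proof (cases x)
      case False
      have "l1 @ l2 \<in> ?X n (?d - 1, ?c)"
        unfolding Suc.IH fst_conv snd_conv m1[OF na] using ok l2 False len na
        by (intro conjI exI[of _ l1] exI[of _ l2]) (auto simp: nonneg_def)
      then show ?thesis unfolding ns using na l False by simp
    next
      case True
      have "l1 @ l2 \<in> ?X (n + 1) (?d + ?T, ?c)"
        unfolding Suc.IH fst_conv snd_conv m1[OF na] using ok l2 True len na
        by (intro conjI exI[of _ l1] exI[of _ l2]) (auto simp: nonneg_def algebra_simps)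
      then show ?thesis unfolding ns using na l True by simp
    qed
  qed
qed

definition SS :: "nat \<times> nat \<Rightarrow> nat \<times> nat \<Rightarrow> (nat \<times> nat) set \<Rightarrow> int \<Rightarrow> int \<times> int \<Rightarrow> bool list set" where
  "SS t k I = ((NS 1 t)^^fst k) (((NS 2 t)^^snd k) (SQ I))"

lemma SS_char:
  assumes I: "monomial_ideal I" and P: "pos_t_determined t I"
  shows "l \<in> SS t k I n a \<longleftrightarrow> nonneg a \<and>
     (\<exists>l1 l2. l = l1 @ l2 \<and> length l1 = fst k \<and> length l2 = snd k
        \<and> okw (int (fst t)) (min (fst a) (int (fst t))) l1
        \<and> okw (int (snd t)) (min (snd a) (int (snd t))) l2
        \<and> n + int (cntT l1) + int (cntT l2) = 0
        \<and> in_supp I (endw (int (fst t)) (min (fst a) (int (fst t))) l1, endw (int (snd t)) (min (snd a) (int (snd t))) l2))"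
    (is "_ \<longleftrightarrow> nonneg a \<and> (\<exists>l1 l2. ?R l1 l2)")
proof -
  let ?e = "\<lambda>l1. endw (int (fst t)) (min (fst a) (int (fst t))) l1"
  let ?c = "min (snd a) (int (snd t))"
  have e: "min (?e l1) (int (fst t)) = ?e l1" for l1
    using endw_le[of "min (fst a) (int (fst t))" "int (fst t)" l1] by simp
  have c: "min ?c (int (snd t)) = ?c" by simp
  have nn: "nonneg (x, y) \<longleftrightarrow> 0 \<le> x \<and> 0 \<le> y" for x y by (simp add: nonneg_def)
  have isn: "in_supp I (x, y) \<Longrightarrow> 0 \<le> x" for x y by (simp add: in_supp_def nonneg_def)
  have c2: "nonneg a \<Longrightarrow> 0 \<le> ?c" by (simp add: nonneg_def)
  have eq: "l \<in> SS t k I n a \<longleftrightarrow> nonneg a \<and> (\<exists>l1 l2. l = l1 @ l2 \<and> length l1 = fst k \<and> okw (int (fst t)) (min (fst a) (int (fst t))) l1 \<and>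
      ((0 \<le> ?e l1 \<and> 0 \<le> ?c) \<and> length l2 = snd k \<and> n + int (cntT l1) + int (cntT l2) = 0 \<and>
        okw (int (snd t)) ?c l2 \<and> in_supp I (?e l1, endw (int (snd t)) ?c l2)))"
    unfolding SS_def S1_char[OF I P] S2_char[OF I P] fst_conv snd_conv e c nn ..
  show ?thesis
  proof
    assume "l \<in> SS t k I n a"
    then obtain l1 l2 where "nonneg a" "l = l1 @ l2 \<and> length l1 = fst k \<and> okw (int (fst t)) (min (fst a) (int (fst t))) l1 \<and>
      ((0 \<le> ?e l1 \<and> 0 \<le> ?c) \<and> length l2 = snd k \<and> n + int (cntT l1) + int (cntT l2) = 0 \<and>
        okw (int (snd t)) ?c l2 \<and> in_supp I (?e l1, endw (int (snd t)) ?c l2))" unfolding eq by blast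
    then show "nonneg a \<and> (\<exists>l1 l2. ?R l1 l2)" by blast
  next
    assume "nonneg a \<and> (\<exists>l1 l2. ?R l1 l2)"
    then obtain l1 l2 where na: "nonneg a" and R: "?R l1 l2" by blast
    have "0 \<le> ?e l1" using R isn by blast
    then show "l \<in> SS t k I n a" unfolding eq using na R c2[OF na] by blast
  qed
qed



lemma cnt_Suc_split: "cntT l = Suc n \<Longrightarrow> \<exists>A C. l = A @ True # C \<and> True \<notin> set A \<and> cntT C = n"
proof (induction l)
  case Nil then show ?case by simp
next
  case (Cons x l)
  show ?case
  proof (cases x)
    case True
    then show ?thesis using Cons.prems by (intro exI[of _ "[]"] exI[of _ l]) auto
  next
    case False
    then obtain A C where "l = A @ True # C" "True \<notin> set A" "cntT C = n" using Cons by auto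
    then show ?thesis using False by (intro exI[of _ "False # A"] exI[of _ C]) auto
  qed
qed

lemma cnt0: "cntT l = 0 \<longleftrightarrow> True \<notin> set l"
  by (induction l) (auto simp: cntT_def)

lemma cnt1: "cntT l = 1 \<Longrightarrow> \<exists>A C. l = A @ True # C \<and> True \<notin> set A \<and> True \<notin> set C"
  using cnt_Suc_split[of l 0] cnt0 by auto

lemma cnt2: "cntT l = 2 \<Longrightarrow> \<exists>A B C. l = A @ True # B @ True # C \<and> True \<notin> set A \<and> True \<notin> set B \<and> True \<notin> set C"
proof -
  assume "cntT l = 2"
  then obtain A C where "l = A @ True # C" "True \<notin> set A" "cntT C = 1" using cnt_Suc_split[of l 1] by auto
  moreover obtain B E where "C = B @ True # E" "True \<notin> set B" "True \<notin> set E" using cnt1[OF \<open>cntT C = 1\<close>] by blast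
  ultimately show ?thesis by blast
qed

lemma noT_rep: "True \<notin> set A \<Longrightarrow> A = replicate (length A) False"
  by (induction A) auto

lemma okw_noT: "True \<notin> set A \<Longrightarrow> okw T c (A @ l) = ((A \<noteq> [] \<longrightarrow> int (length A) \<le> c) \<and> okw T (c - int (length A)) l)"
proof (induction A arbitrary: c)
  case Nil then show ?case by simp
next
  case (Cons x A)
  then have x: "x = False" "True \<notin> set A" by auto
  show ?case using Cons.IH[OF x(2), of "c - 1"] x by (auto simp: algebra_simps)
qed

lemma endw_noT: "True \<notin> set A \<Longrightarrow> endw T c (A @ l) = endw T (c - int (length A)) l"
proof (induction A arbitrary: c)
  case Nil then show ?case by simp
next
  case (Cons x A)
  then have x: "x = False" "True \<notin> set A" by auto
  show ?case using Cons.IH[OF x(2), of "c - 1"] x by (auto simp: algebra_simps)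
qed

lemma okw_noT0: "True \<notin> set A \<Longrightarrow> okw T c A = (A \<noteq> [] \<longrightarrow> int (length A) \<le> c)"
  using okw_noT[of A T c "[]"] by simp
lemma endw_noT0: "True \<notin> set A \<Longrightarrow> endw T c A = c - int (length A)"
  using endw_noT[of A T c "[]"] by simp

lemma Tpos_noT: "True \<notin> set A \<Longrightarrow> Tpos (A @ l) = (\<lambda>j. length A + j) ` Tpos l"
proof (induction A)
  case Nil then show ?case by simp
next
  case (Cons x A)
  then have x: "x = False" by auto
  show ?case using Cons x by (auto simp: image_image)
qed

lemma Tpos_noT0: "True \<notin> set A \<Longrightarrow> Tpos A = {}"
  using Tpos_noT[of A "[]"] by simp

lemma sg_noT: "True \<notin> set A \<Longrightarrow> sg n (A @ l) (length A + j) = sg n l j"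
proof -
  assume "True \<notin> set A"
  then have "cntT A = 0" using cnt0 by blast
  then show ?thesis by (simp add: sg_def)
qed

lemma Tpos1: "True \<notin> set A \<Longrightarrow> True \<notin> set C \<Longrightarrow> Tpos (A @ True # C) = {length A}"
  by (simp add: Tpos_noT Tpos_noT0)

lemma Tpos2: "True \<notin> set A \<Longrightarrow> True \<notin> set B \<Longrightarrow> True \<notin> set C \<Longrightarrow>
    Tpos (A @ True # B @ True # C) = {length A, length A + Suc (length B)}"
  by (simp add: Tpos_noT Tpos_noT0)

lemma upd1: "(A @ x # C)[length A := y] = A @ y # C" by (simp add: list_update_append)
lemma upd2: "(A @ x # B @ y # C)[length A + Suc (length B) := z] = A @ x # B @ z # C"
  by (simp add: list_update_append)

lemma sg1: "True \<notin> set A \<Longrightarrow> sg n (A @ True # C) (length A) = (if even n then -1 else 1)"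
  using sg_noT[of A n "True # C" 0] by simp
lemma sg2: "True \<notin> set A \<Longrightarrow> True \<notin> set B \<Longrightarrow>
   sg n (A @ True # B @ True # C) (length A + Suc (length B)) = (if even (n+1) then -1 else 1)"
proof -
  assume a: "True \<notin> set A" and b: "True \<notin> set B"
  have "sg n (A @ True # B @ True # C) (length A + Suc (length B)) = sg n (True # B @ True # C) (Suc (length B))"
    using sg_noT[OF a] by blast
  also have "\<dots> = sg (n+1) (B @ True # C) (length B)" by simp
  also have "\<dots> = (if even (n+1) then -1 else 1)" using sg1[OF b] .
  finally show ?thesis .
qed

lemma sum2: "i \<noteq> j \<Longrightarrow> (\<Sum>x\<in>{i, j}. f x) = f i + (f j :: 'k::comm_ring_1)" by simp



locale nsetup =
  fixes I :: "(nat \<times> nat) set" and t k :: "nat \<times> nat"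
  assumes MI: "monomial_ideal I" and PT: "pos_t_determined t I"
    and k1: "1 \<le> fst k" and k2: "1 \<le> snd k" and k1t: "fst k \<le> fst t + 1" and k2t: "snd k \<le> snd t + 1"

context nsetup
begin

lemma endT: "True \<notin> set A \<Longrightarrow> True \<notin> set C \<Longrightarrow> endw T c (A @ True # C) = T - int (length C)"
  by (simp add: endw_noT endw_noT0)

lemma split_m1:
  assumes "l \<in> SS t k I n a"
  obtains l1 l2 where "nonneg a" "l = l1 @ l2" "length l1 = fst k" "length l2 = snd k"
     "okw (int (fst t)) (min (fst a) (int (fst t))) l1"
     "okw (int (snd t)) (min (snd a) (int (snd t))) l2"
     "n + int (cntT l1) + int (cntT l2) = 0"
     "in_supp I (endw (int (fst t)) (min (fst a) (int (fst t))) l1, endw (int (snd t)) (min (snd a) (int (snd t))) l2)"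
  using assms SS_char[OF MI PT] by blast

lemma dirA:
  assumes ii: "\<forall>x. in_supp I x \<longrightarrow> fst x \<le> int (fst t) - int (fst k) \<and> snd x \<le> int (snd t) - int (snd k)"
  shows "SS t k I (-1) a = {}"
proof (rule ccontr)
  assume "SS t k I (-1) a \<noteq> {}"
  then obtain l where "l \<in> SS t k I (-1) a" by blast
  then obtain l1 l2 where na: "nonneg a" and len: "length l1 = fst k" "length l2 = snd k"
     and cn: "-1 + int (cntT l1) + int (cntT l2) = 0"
     and su: "in_supp I (endw (int (fst t)) (min (fst a) (int (fst t))) l1, endw (int (snd t)) (min (snd a) (int (snd t))) l2)"
    by (rule split_m1)
  from cn have "cntT l1 = 1 \<and> cntT l2 = 0 \<or> cntT l1 = 0 \<and> cntT l2 = 1" by linarith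
  then show False
  proof
    assume "cntT l1 = 1 \<and> cntT l2 = 0"
    then obtain A C where l1: "l1 = A @ True # C" "True \<notin> set A" "True \<notin> set C" using cnt1 by blast
    have "endw (int (fst t)) (min (fst a) (int (fst t))) l1 = int (fst t) - int (length C)"
      using l1 endT by simp
    moreover have "length C + 1 \<le> fst k" using len l1 by simp
    ultimately show False using ii su by fastforce
  next
    assume "cntT l1 = 0 \<and> cntT l2 = 1"
    then obtain A C where l2: "l2 = A @ True # C" "True \<notin> set A" "True \<notin> set C" using cnt1 by blast
    have "endw (int (snd t)) (min (snd a) (int (snd t))) l2 = int (snd t) - int (length C)"
      using l2 endT by simp
    moreover have "length C + 1 \<le> snd k" using len l2 by simp
    ultimately show False using ii su by fastforce
  qed
qed

end



lemma ddf_zv: "ddf S n a (zv :: 'k::comm_ring_1 vec) = zv"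
  by (simp add: ddf_def zv_def fun_eq_iff)

lemma cyc2:
  fixes z :: "'k::comm_ring_1 vec"
  assumes cy: "ddf S (-1) a z = zv" and l: "A @ True # B @ True # C \<in> S (-2) a"
    and nA: "True \<notin> set A" and nB: "True \<notin> set B" and nC: "True \<notin> set C"
  shows "z (A @ False # B @ True # C) = z (A @ True # B @ False # C)"
proof -
  let ?l = "A @ True # B @ True # C"
  have "ddf S (-1) a z ?l = 0" using cy by (simp add: zv_def)
  moreover have "ddf S (-1) a z ?l = sg (-1) ?l (length A) * z (?l[length A := False])
      + sg (-1) ?l (length A + Suc (length B)) * z (?l[length A + Suc (length B) := False])"
    using l by (simp add: ddf_def Tpos2[OF nA nB nC])
  moreover have "?l[length A := False] = A @ False # B @ True # C" using upd1[of A True "B @ True # C" False] by simp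
  moreover have "?l[length A + Suc (length B) := False] = A @ True # B @ False # C" using upd2 by simp
  moreover have "sg (-1) ?l (length A) = (1::'k)" using sg1[OF nA, of "-1" "B @ True # C"] by simp
  moreover have "sg (-1) ?l (length A + Suc (length B)) = (-1::'k)" using sg2[OF nA nB, of "-1" C] by simp
  ultimately show ?thesis by (simp add: algebra_simps)
qed



lemma cntT_rep[simp]: "cntT (replicate n False) = 0"
  using cnt0 by simp

context nsetup
begin

lemma dirB:
  fixes z :: "'k::comm_ring_1 vec"
  assumes i: "in_supp I (int (fst t) + 1 - int (fst k), int (snd t) + 1 - int (snd k))"
    and zS: "\<forall>l. z l \<noteq> 0 \<longrightarrow> l \<in> SS t k I (-1) a" and cy: "ddf (SS t k I) (-1) a z = zv"
  shows "\<exists>b. (\<forall>l. b l \<noteq> 0 \<longrightarrow> l \<in> SS t k I 0 a) \<and> ddf (SS t k I) 0 a b = z"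
proof (cases "nonneg a")
  case False
  then have "SS t k I (-1) a = {}" using SS_char[OF MI PT] by blast
  then have z0: "z = zv" using zS by (auto simp: zv_def fun_eq_iff)
  have "ddf (SS t k I) 0 a zv = (zv :: 'k vec)" by (rule ddf_zv)
  then show ?thesis using z0 by (intro exI[of _ zv]) (auto simp: zv_def)
next
  case na: True
  obtain K1 where K1: "fst k = Suc K1" using k1 by (cases "fst k") auto
  obtain K2 where K2: "snd k = Suc K2" using k2 by (cases "snd k") auto
  define T1 where "T1 = int (fst t)"
  define T2 where "T2 = int (snd t)"
  define d where "d = min (fst a) T1"
  define c where "c = min (snd a) T2"
  define S where "S = SS t k I"
  define o1 where "o1 = True # replicate K1 False @ False # replicate K2 False"
  define o2 where "o2 = False # replicate K1 False @ True # replicate K2 False"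
  have K1T: "int K1 \<le> T1" using k1t K1 by (simp add: T1_def)
  have K2T: "int K2 \<le> T2" using k2t K2 by (simp add: T2_def)
  have d0: "0 \<le> d" "d \<le> T1" using na by (auto simp: d_def T1_def nonneg_def)
  have c0: "0 \<le> c" "c \<le> T2" using na by (auto simp: c_def T2_def nonneg_def)
  have SSc: "l \<in> S n a \<longleftrightarrow> (\<exists>l1 l2. l = l1 @ l2 \<and> length l1 = Suc K1 \<and> length l2 = Suc K2 \<and> okw T1 d l1 \<and> okw T2 c l2
      \<and> n + int (cntT l1) + int (cntT l2) = 0 \<and> in_supp I (endw T1 d l1, endw T2 c l2))" for l n
    using SS_char[OF MI PT, of l k n a] na unfolding S_def T1_def T2_def d_def c_def K1 K2 by simp
  have cyS: "ddf S (-1) a z = zv" using cy by (simp add: S_def)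
  have nr: "True \<notin> set (replicate n False)" for n by simp
  have claim1: "z l = z o1 \<or> z l = z o2" if lS: "l \<in> S (-1) a" for l
  proof -
    obtain l1 l2 where l: "l = l1 @ l2" and len1: "length l1 = Suc K1" and len2: "length l2 = Suc K2"
      and ok1: "okw T1 d l1" and ok2: "okw T2 c l2" and cn: "-1 + int (cntT l1) + int (cntT l2) = 0"
      and su: "in_supp I (endw T1 d l1, endw T2 c l2)" using lS unfolding SSc by blast
    from cn have "cntT l1 = 1 \<and> cntT l2 = 0 \<or> cntT l1 = 0 \<and> cntT l2 = 1" by linarith
    then show ?thesis
    proof
      assume "cntT l1 = 1 \<and> cntT l2 = 0"
      then obtain A C where l1: "l1 = A @ True # C" and nA: "True \<notin> set A" and nC: "True \<notin> set C"
        and n2: "True \<notin> set l2" using cnt1 cnt0 by blast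
      have l2r: "l2 = replicate (Suc K2) False" using noT_rep[OF n2] len2 by simp
      show ?thesis
      proof (cases A)
        case Nil
        then have "C = replicate K1 False" using noT_rep[OF nC] len1 l1 by simp
        then have "l = o1" using l l1 l2r Nil by (simp add: o1_def)
        then show ?thesis by simp
      next
        case (Cons x A')
        then have x: "x = False" and nA': "True \<notin> set A'" using nA by auto
        let ?l' = "[] @ True # A' @ True # (C @ l2)"
        have l'S: "?l' \<in> S (-2) a" unfolding SSc
        proof (rule exI[of _ "True # A' @ True # C"], rule exI[of _ l2], intro conjI)
          show "?l' = (True # A' @ True # C) @ l2" by simp
          show "length (True # A' @ True # C) = Suc K1" using len1 l1 Cons by simp
          show "length l2 = Suc K2" by fact
          show "okw T1 d (True # A' @ True # C)"
            using ok1 l1 Cons x nA' d0 by (auto simp: okw_noT)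
          show "okw T2 c l2" by fact
          show "-2 + int (cntT (True # A' @ True # C)) + int (cntT l2) = 0"
            using cnt0[of A'] cnt0[of C] cnt0[of l2] nA' nC n2 by simp
          show "in_supp I (endw T1 d (True # A' @ True # C), endw T2 c l2)"
            using su l1 Cons x nA' by (simp add: endw_noT)
        qed
        have "z (False # A' @ True # C @ l2) = z (True # A' @ False # C @ l2)"
          using cyc2[OF cyS l'S _ nA'] nC n2 by simp
        moreover have "False # A' @ True # C @ l2 = l" using l l1 Cons x by simp
        moreover have "True # A' @ False # C @ l2 = o1"
        proof -
          have L: "length (A' @ False # C) = K1" using len1 l1 Cons by simp
          have N: "True \<notin> set (A' @ False # C)" using nA' nC by simp
          have "A' @ False # C = replicate K1 False" using noT_rep[OF N, unfolded L] .
          then show ?thesis unfolding o1_def l2r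
            by (metis append.assoc append_Cons replicate_Suc)
        qed
        ultimately show ?thesis by simp
      qed
    next
      assume "cntT l1 = 0 \<and> cntT l2 = 1"
      then obtain A C where l2: "l2 = A @ True # C" and nA: "True \<notin> set A" and nC: "True \<notin> set C"
        and n1: "True \<notin> set l1" using cnt1 cnt0 by blast
      have l1r: "l1 = replicate (Suc K1) False" using noT_rep[OF n1] len1 by simp
      show ?thesis
      proof (cases A)
        case Nil
        then have "C = replicate K2 False" using noT_rep[OF nC] len2 l2 by simp
        then have "l = o2" using l l2 l1r Nil by (simp add: o2_def)
        then show ?thesis by simp
      next
        case (Cons x A')
        then have x: "x = False" and nA': "True \<notin> set A'" using nA by auto
        let ?l' = "l1 @ True # A' @ True # C"
        have "?l' \<in> S (-2) a" unfolding SSc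
        proof (rule exI[of _ l1], rule exI[of _ "True # A' @ True # C"], intro conjI)
          show "?l' = l1 @ (True # A' @ True # C)" by simp
          show "length (True # A' @ True # C) = Suc K2" using len2 l2 Cons by simp
          show "length l1 = Suc K1" by fact
          show "okw T2 c (True # A' @ True # C)"
            using ok2 l2 Cons x nA' c0 by (auto simp: okw_noT)
          show "okw T1 d l1" by fact
          show "-2 + int (cntT l1) + int (cntT (True # A' @ True # C)) = 0"
            using cnt0[of A'] cnt0[of C] cnt0[of l1] nA' nC n1 by simp
          show "in_supp I (endw T1 d l1, endw T2 c (True # A' @ True # C))"
            using su l2 Cons x nA' by (simp add: endw_noT)
        qed
        from cyc2[OF cyS this n1 nA' nC]
        have "z (l1 @ False # A' @ True # C) = z (l1 @ True # A' @ False # C)" .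
        moreover have "l1 @ False # A' @ True # C = l" using l l2 Cons x by simp
        moreover have "l1 @ True # A' @ False # C = o2"
        proof -
          have L: "length (A' @ False # C) = K2" using len2 l2 Cons by simp
          have N: "True \<notin> set (A' @ False # C)" using nA' nC by simp
          have "A' @ False # C = replicate K2 False" using noT_rep[OF N, unfolded L] .
          then show ?thesis unfolding o2_def l1r by simp
        qed
        ultimately show ?thesis by simp
      qed
    qed
  qed
  have m11: "z o2 = z o1"
  proof -
    let ?m = "[] @ True # replicate K1 False @ True # replicate K2 False"
    have "?m \<in> S (-2) a" unfolding SSc
    proof (rule exI[of _ "True # replicate K1 False"], rule exI[of _ "True # replicate K2 False"], intro conjI)
      show "?m = (True # replicate K1 False) @ (True # replicate K2 False)" by simp
      show "okw T1 d (True # replicate K1 False)" using K1T by (simp add: okw_noT0)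
      show "okw T2 c (True # replicate K2 False)" using K2T by (simp add: okw_noT0)
      show "in_supp I (endw T1 d (True # replicate K1 False), endw T2 c (True # replicate K2 False))"
        using i K1 K2 by (simp add: endw_noT0 T1_def T2_def)
    qed auto
    from cyc2[OF cyS this _ nr nr]
    show ?thesis unfolding o1_def o2_def by simp
  qed
  have allc: "z l = z o1" if "l \<in> S (-1) a" for l using claim1[OF that] m11 by auto
  show ?thesis
  proof (cases "z o1 = 0")
    case True
    then have "z = zv" using allc zS by (auto simp: zv_def fun_eq_iff S_def)
    moreover have "ddf (SS t k I) 0 a zv = (zv :: 'k vec)" by (rule ddf_zv)
    ultimately show ?thesis by (intro exI[of _ zv]) (auto simp: zv_def)
  next
    case False
    have o1S: "o1 \<in> S (-1) a" using zS False by (auto simp: S_def)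
    have o2S: "o2 \<in> S (-1) a" using zS False m11 by (auto simp: S_def)
    obtain l1 l2 where o1e: "o1 = l1 @ l2" and o1l: "length l1 = Suc K1" and okc: "okw T2 c l2"
      using o1S unfolding SSc by blast
    have "(True # replicate K1 False) @ (False # replicate K2 False) = l1 @ l2" using o1e by (simp add: o1_def)
    then have "l2 = replicate (Suc K2) False"
      using o1l append_eq_append_conv[of "True # replicate K1 False" l1] by simp
    then have cK: "int (Suc K2) \<le> c" using okc by (cases "K2 = 0") (auto simp: okw_noT0)
    obtain l1' l2' where o2e: "o2 = l1' @ l2'" and o2l: "length l1' = Suc K1" and okd: "okw T1 d l1'"
      and su: "in_supp I (endw T1 d l1', endw T2 c l2')"
      using o2S unfolding SSc by blast
    have "(False # replicate K1 False) @ (True # replicate K2 False) = l1' @ l2'" using o2e by (simp add: o2_def)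
    then have e1: "l1' = replicate (Suc K1) False" and e2: "l2' = True # replicate K2 False"
      using o2l append_eq_append_conv[of "False # replicate K1 False" l1'] by simp_all
    have dK: "int (Suc K1) \<le> d" using okd e1 by (cases "K1 = 0") (auto simp: okw_noT0)
    have E1: "endw T1 d l1' = d - int (Suc K1)" using e1 by (simp add: endw_noT0 algebra_simps)
    have E2: "endw T2 c l2' = T2 - int K2" using e2 by (simp add: endw_noT0)
    have su2: "in_supp I (d - int (Suc K1), T2 - int K2)" using su unfolding E1 E2 .
    define e where "e = replicate (Suc K1) False @ replicate (Suc K2) False"
    have eS: "e \<in> S 0 a" unfolding SSc
    proof (rule exI[of _ "replicate (Suc K1) False"], rule exI[of _ "replicate (Suc K2) False"], intro conjI)
      show "in_supp I (endw T1 d (replicate (Suc K1) False), endw T2 c (replicate (Suc K2) False))"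
        using in_supp_down[OF MI su2] dK cK c0 by (simp add: endw_noT0 nonneg_def ple_def)
    qed (use dK cK in \<open>auto simp: e_def okw_noT0\<close>)
    define b where "b = (\<lambda>l. if l = e then - z o1 else (0::'k))"
    have bS: "\<forall>l. b l \<noteq> 0 \<longrightarrow> l \<in> S 0 a" using eS by (simp add: b_def)
    have "ddf S 0 a b = z"
    proof (rule ext)
      fix l
      show "ddf S 0 a b l = z l"
      proof (cases "l \<in> S (-1) a")
        case False
        then show ?thesis using zS by (auto simp: ddf_def S_def)
      next
        case True
        obtain l1 l2 where l: "l = l1 @ l2" and len: "length l1 = Suc K1" "length l2 = Suc K2"
          and cn: "-1 + int (cntT l1) + int (cntT l2) = 0" using True unfolding SSc by blast
        have "cntT l = 1" using cn l by simp
        then obtain A C where lAC: "l = A @ True # C" and nA: "True \<notin> set A" and nC: "True \<notin> set C"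
          using cnt1 by blast
        have L: "length (A @ False # C) = Suc K1 + Suc K2" using len l lAC
          by (metis length_append list.size(4))
        have N: "True \<notin> set (A @ False # C)" using nA nC by simp
        have "A @ False # C = e" using noT_rep[OF N, unfolded L] by (simp add: e_def replicate_add replicate_append_same)
        then have "ddf S 0 a b l = (-1) * (- z o1)"
          using True lAC by (simp add: ddf_def Tpos1[OF nA nC] upd1 sg1[OF nA] b_def)
        then show ?thesis using allc[OF True] by simp
      qed
    qed
    then show ?thesis using bS unfolding S_def by blast
  qed
qed

end



lemma ddf2:
  fixes z :: "'k::comm_ring_1 vec"
  assumes l: "A @ True # B @ True # C \<in> S (-2) a"
    and nA: "True \<notin> set A" and nB: "True \<notin> set B" and nC: "True \<notin> set C"
  shows "ddf S (-1) a z (A @ True # B @ True # C) = z (A @ False # B @ True # C) - z (A @ True # B @ False # C)"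
proof -
  let ?l = "A @ True # B @ True # C"
  have "ddf S (-1) a z ?l = sg (-1) ?l (length A) * z (?l[length A := False])
      + sg (-1) ?l (length A + Suc (length B)) * z (?l[length A + Suc (length B) := False])"
    using l by (simp add: ddf_def Tpos2[OF nA nB nC])
  moreover have "?l[length A := False] = A @ False # B @ True # C" using upd1[of A True "B @ True # C" False] by simp
  moreover have "?l[length A + Suc (length B) := False] = A @ True # B @ False # C" using upd2 by simp
  moreover have "sg (-1) ?l (length A) = (1::'k)" using sg1[OF nA, of "-1" "B @ True # C"] by simp
  moreover have "sg (-1) ?l (length A + Suc (length B)) = (-1::'k)" using sg2[OF nA nB, of "-1" C] by simp
  ultimately show ?thesis by (simp add: algebra_simps)
qed

lemma oneD:
  assumes nA: "True \<notin> set A" and nB: "True \<notin> set B" and nC: "True \<notin> set C"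
    and ok: "okw T m (A @ True # B @ True # C)" and len: "length (A @ True # B @ True # C) = Suc (nat m)"
    and m0: "0 \<le> m" and mT: "m \<le> T"
  shows "okw T m (A @ False # B @ True # C) \<and> endw T m (A @ False # B @ True # C) = endw T m (A @ True # B @ True # C)
     \<and> okw T m (A @ True # B @ False # C) \<and> endw T m (A @ True # B @ False # C) \<le> endw T m (A @ True # B @ True # C)
     \<and> 0 \<le> endw T m (A @ True # B @ False # C)"
  using assms by (auto simp: okw_noT endw_noT okw_noT0 endw_noT0)



lemma in_supp_nn: "in_supp I (u, v) \<Longrightarrow> 0 \<le> u \<and> 0 \<le> v"
  by (simp add: in_supp_def nonneg_def)

lemma not_bdry:
  fixes z :: "'k::comm_ring_1 vec"
  assumes "S 0 a = {}" and "z l \<noteq> 0"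
  shows "\<not>(\<exists>b. (\<forall>l. b l \<noteq> 0 \<longrightarrow> l \<in> S 0 a) \<and> ddf S 0 a b = z)"
proof
  assume "\<exists>b. (\<forall>l. b l \<noteq> 0 \<longrightarrow> l \<in> S 0 a) \<and> ddf S 0 a b = z"
  then obtain b where b: "\<forall>l. b l \<noteq> 0 \<longrightarrow> l \<in> S 0 a" and e: "ddf S 0 a b = z" by blast
  have "b = zv" using b assms(1) by (auto simp: zv_def fun_eq_iff)
  then have "z = zv" using e ddf_zv by metis
  then show False using assms(2) by (simp add: zv_def)
qed

context nsetup
begin

lemma dirC:
  assumes ni: "\<not> in_supp I (int (fst t) + 1 - int (fst k), int (snd t) + 1 - int (snd k))"
    and x: "in_supp I x" and out: "int (fst t) - int (fst k) < fst x \<or> int (snd t) - int (snd k) < snd x"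
  shows "\<exists>a (z::'k::comm_ring_1 vec). (\<forall>l. z l \<noteq> 0 \<longrightarrow> l \<in> SS t k I (-1) a) \<and> ddf (SS t k I) (-1) a z = zv
     \<and> \<not>(\<exists>b. (\<forall>l. b l \<noteq> 0 \<longrightarrow> l \<in> SS t k I 0 a) \<and> ddf (SS t k I) 0 a b = z)"
proof -
  obtain K1 where K1: "fst k = Suc K1" using k1 by (cases "fst k") auto
  obtain K2 where K2: "snd k = Suc K2" using k2 by (cases "snd k") auto
  define T1 where "T1 = int (fst t)"
  define T2 where "T2 = int (snd t)"
  define S where "S = SS t k I"
  have K1T: "int K1 \<le> T1" using k1t K1 by (simp add: T1_def)
  have K2T: "int K2 \<le> T2" using k2t K2 by (simp add: T2_def)
  have ni': "\<not> in_supp I (T1 - int K1, T2 - int K2)" using ni K1 K2 by (simp add: T1_def T2_def)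
  have xnn: "0 \<le> fst x" "0 \<le> snd x" using x by (auto simp: in_supp_def nonneg_def)
  have SSc: "l \<in> S n a \<longleftrightarrow> nonneg a \<and> (\<exists>l1 l2. l = l1 @ l2 \<and> length l1 = Suc K1 \<and> length l2 = Suc K2
      \<and> okw T1 (min (fst a) T1) l1 \<and> okw T2 (min (snd a) T2) l2
      \<and> n + int (cntT l1) + int (cntT l2) = 0 \<and> in_supp I (endw T1 (min (fst a) T1) l1, endw T2 (min (snd a) T2) l2))" for l n a
    using SS_char[OF MI PT, of l k n a] unfolding S_def T1_def T2_def K1 K2 by simp
  have ii: "in_supp I (T1 - int (length C1), T2 - int (length C2)) \<Longrightarrow> length C1 \<le> K1 \<Longrightarrow> length C2 \<le> K2 \<Longrightarrow> False" for C1 C2 :: "bool list"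
    using in_supp_down[OF MI, of "(T1 - int (length C1), T2 - int (length C2))" "(T1 - int K1, T2 - int K2)"] ni' K1T K2T
    by (simp add: nonneg_def ple_def)
  from out show ?thesis
  proof
    assume o: "int (fst t) - int (fst k) < fst x"
    define y0 where "y0 = snd x"
    have P1: "in_supp I (T1 - int K1, y0)"
      using in_supp_down[OF MI x, of "(T1 - int K1, y0)"] o K1 K1T xnn by (simp add: y0_def T1_def nonneg_def ple_def)
    have y0le: "y0 + int K2 < T2"
    proof (rule ccontr)
      assume "\<not> y0 + int K2 < T2"
      then have "in_supp I (T1 - int K1, T2 - int K2)"
        using in_supp_down[OF MI P1, of "(T1 - int K1, T2 - int K2)"] K1T K2T by (simp add: nonneg_def ple_def)
      then show False using ni' by blast
    qed
    define a where "a = (int K1, y0 + int (Suc K2))"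
    have na: "nonneg a" using xnn by (simp add: a_def nonneg_def y0_def)
    have da: "min (fst a) T1 = int K1" using K1T by (simp add: a_def)
    have ca: "min (snd a) T2 = y0 + int (Suc K2)" using y0le by (simp add: a_def)
    have SSa: "l \<in> S n a \<longleftrightarrow> (\<exists>l1 l2. l = l1 @ l2 \<and> length l1 = Suc K1 \<and> length l2 = Suc K2
      \<and> okw T1 (int K1) l1 \<and> okw T2 (y0 + int (Suc K2)) l2
      \<and> n + int (cntT l1) + int (cntT l2) = 0 \<and> in_supp I (endw T1 (int K1) l1, endw T2 (y0 + int (Suc K2)) l2))" for l n
      unfolding SSc da ca using na by simp
    have S0: "S 0 a = {}"
    proof (rule ccontr)
      assume "S 0 a \<noteq> {}"
      then obtain l where "l \<in> S 0 a" by blast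
      then obtain l1 l2 where "length l1 = Suc K1" "okw T1 (int K1) l1" "0 + int (cntT l1) + int (cntT l2) = 0"
        unfolding SSa by blast
      then show False using cnt0[of l1] by (simp add: okw_noT0)
    qed
    define z where "z = (\<lambda>l. if l \<in> S (-1) a then 1 else (0::'k))"
    define o1 where "o1 = (True # replicate K1 False) @ replicate (Suc K2) False"
    have o1S: "o1 \<in> S (-1) a" unfolding SSa o1_def
    proof (rule exI[of _ "True # replicate K1 False"], rule exI[of _ "replicate (Suc K2) False"], intro conjI)
      show "okw T1 (int K1) (True # replicate K1 False)" using K1T by (simp add: okw_noT0)
      show "okw T2 (y0 + int (Suc K2)) (replicate (Suc K2) False)" using xnn by (simp add: okw_noT0 y0_def)
      show "in_supp I (endw T1 (int K1) (True # replicate K1 False), endw T2 (y0 + int (Suc K2)) (replicate (Suc K2) False))"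
        using P1 by (simp add: endw_noT0)
    qed auto
    have cyc: "ddf S (-1) a z = zv"
    proof (rule ext)
      fix l
      show "ddf S (-1) a z l = zv l"
      proof (cases "l \<in> S (-2) a")
        case False then show ?thesis by (simp add: ddf_def zv_def)
      next
        case True
        then obtain l1 l2 where l: "l = l1 @ l2" and len1: "length l1 = Suc K1" and len2: "length l2 = Suc K2"
          and ok1: "okw T1 (int K1) l1" and ok2: "okw T2 (y0 + int (Suc K2)) l2"
          and cn: "-2 + int (cntT l1) + int (cntT l2) = 0"
          and su: "in_supp I (endw T1 (int K1) l1, endw T2 (y0 + int (Suc K2)) l2)"
          unfolding SSa by blast
        have c10: "cntT l1 \<noteq> 0" using ok1 len1 cnt0[of l1] by (auto simp: okw_noT0)
        have c11: "\<not> (cntT l1 = 1 \<and> cntT l2 = 1)"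
        proof
          assume "cntT l1 = 1 \<and> cntT l2 = 1"
          then obtain A1 C1 A2 C2 where "l1 = A1 @ True # C1" "True \<notin> set A1" "True \<notin> set C1"
            "l2 = A2 @ True # C2" "True \<notin> set A2" "True \<notin> set C2" using cnt1 by metis
          then show False using su len1 len2 ii[of C1 C2] by (simp add: endw_noT endw_noT0)
        qed
        from cn c10 c11 have "cntT l1 = 2 \<and> cntT l2 = 0" by linarith
        then obtain A B C where l1: "l1 = A @ True # B @ True # C" and nA: "True \<notin> set A" and nB: "True \<notin> set B"
          and nC: "True \<notin> set C" and n2: "True \<notin> set l2" using cnt2 cnt0 by metis
        have nC2: "True \<notin> set (C @ l2)" using nC n2 by simp
        have lf: "l = A @ True # B @ True # (C @ l2)" using l l1 by simp
        have oD: "okw T1 (int K1) (A @ False # B @ True # C) \<and> endw T1 (int K1) (A @ False # B @ True # C) = endw T1 (int K1) l1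
          \<and> okw T1 (int K1) (A @ True # B @ False # C) \<and> endw T1 (int K1) (A @ True # B @ False # C) \<le> endw T1 (int K1) l1
          \<and> 0 \<le> endw T1 (int K1) (A @ True # B @ False # C)"
          using oneD[OF nA nB nC, of T1 "int K1"] ok1 len1 K1T l1 by simp
        have e2nn: "0 \<le> endw T2 (y0 + int (Suc K2)) l2" using in_supp_nn[OF su] by blast
        have m1: "A @ False # B @ True # C @ l2 \<in> S (-1) a" unfolding SSa
        proof (rule exI[of _ "A @ False # B @ True # C"], rule exI[of _ l2], intro conjI)
          show "-1 + int (cntT (A @ False # B @ True # C)) + int (cntT l2) = 0"
            using cnt0[of A] cnt0[of B] cnt0[of C] cnt0[of l2] nA nB nC n2 by simp
          show "in_supp I (endw T1 (int K1) (A @ False # B @ True # C), endw T2 (y0 + int (Suc K2)) l2)"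
            using su oD by simp
        qed (use len1 len2 l1 ok2 oD in auto)
        have m2: "A @ True # B @ False # C @ l2 \<in> S (-1) a" unfolding SSa
        proof (rule exI[of _ "A @ True # B @ False # C"], rule exI[of _ l2], intro conjI)
          show "-1 + int (cntT (A @ True # B @ False # C)) + int (cntT l2) = 0"
            using cnt0[of A] cnt0[of B] cnt0[of C] cnt0[of l2] nA nB nC n2 by simp
          show "in_supp I (endw T1 (int K1) (A @ True # B @ False # C), endw T2 (y0 + int (Suc K2)) l2)"
            using in_supp_down[OF MI su] oD e2nn by (simp add: nonneg_def ple_def)
        qed (use len1 len2 l1 ok2 oD in auto)
        have "ddf S (-1) a z l = z (A @ False # B @ True # C @ l2) - z (A @ True # B @ False # C @ l2)"
          unfolding lf using ddf2[where A=A and B=B and C="C @ l2" and S=S and a=a and z=z, OF True[unfolded lf] nA nB nC2] .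
        also have "\<dots> = 0" using m1 m2 by (simp add: z_def)
        finally show ?thesis by (simp add: zv_def)
      qed
    qed
    have "z o1 \<noteq> 0" using o1S by (simp add: z_def)
    then have nb: "\<not>(\<exists>b. (\<forall>l. b l \<noteq> 0 \<longrightarrow> l \<in> S 0 a) \<and> ddf S 0 a b = z)" using not_bdry[where S=S and a=a and z=z, OF S0] by blast
    have "\<forall>l. z l \<noteq> 0 \<longrightarrow> l \<in> S (-1) a" by (simp add: z_def)
    then show ?thesis using cyc nb unfolding S_def by blast
  next
    assume o: "int (snd t) - int (snd k) < snd x"
    define x0 where "x0 = fst x"
    have P1: "in_supp I (x0, T2 - int K2)"
      using in_supp_down[OF MI x, of "(x0, T2 - int K2)"] o K2 K2T xnn by (simp add: x0_def T2_def nonneg_def ple_def)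
    have x0le: "x0 + int K1 < T1"
    proof (rule ccontr)
      assume "\<not> x0 + int K1 < T1"
      then have "in_supp I (T1 - int K1, T2 - int K2)"
        using in_supp_down[OF MI P1, of "(T1 - int K1, T2 - int K2)"] K1T K2T by (simp add: nonneg_def ple_def)
      then show False using ni' by blast
    qed
    define a where "a = (x0 + int (Suc K1), int K2)"
    have na: "nonneg a" using xnn by (simp add: a_def nonneg_def x0_def)
    have da: "min (fst a) T1 = x0 + int (Suc K1)" using x0le by (simp add: a_def)
    have ca: "min (snd a) T2 = int K2" using K2T by (simp add: a_def)
    have SSa: "l \<in> S n a \<longleftrightarrow> (\<exists>l1 l2. l = l1 @ l2 \<and> length l1 = Suc K1 \<and> length l2 = Suc K2
      \<and> okw T1 (x0 + int (Suc K1)) l1 \<and> okw T2 (int K2) l2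
      \<and> n + int (cntT l1) + int (cntT l2) = 0 \<and> in_supp I (endw T1 (x0 + int (Suc K1)) l1, endw T2 (int K2) l2))" for l n
      unfolding SSc da ca using na by simp
    have S0: "S 0 a = {}"
    proof (rule ccontr)
      assume "S 0 a \<noteq> {}"
      then obtain l where "l \<in> S 0 a" by blast
      then obtain l1 l2 where "length l2 = Suc K2" "okw T2 (int K2) l2" "0 + int (cntT l1) + int (cntT l2) = 0"
        unfolding SSa by blast
      then show False using cnt0[of l2] by (simp add: okw_noT0)
    qed
    define z where "z = (\<lambda>l. if l \<in> S (-1) a then 1 else (0::'k))"
    define o2 where "o2 = replicate (Suc K1) False @ (True # replicate K2 False)"
    have o2S: "o2 \<in> S (-1) a" unfolding SSa o2_def
    proof (rule exI[of _ "replicate (Suc K1) False"], rule exI[of _ "True # replicate K2 False"], intro conjI)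
      show "okw T2 (int K2) (True # replicate K2 False)" using K2T by (simp add: okw_noT0)
      show "okw T1 (x0 + int (Suc K1)) (replicate (Suc K1) False)" using xnn by (simp add: okw_noT0 x0_def)
      show "in_supp I (endw T1 (x0 + int (Suc K1)) (replicate (Suc K1) False), endw T2 (int K2) (True # replicate K2 False))"
        using P1 by (simp add: endw_noT0)
    qed auto
    have cyc: "ddf S (-1) a z = zv"
    proof (rule ext)
      fix l
      show "ddf S (-1) a z l = zv l"
      proof (cases "l \<in> S (-2) a")
        case False then show ?thesis by (simp add: ddf_def zv_def)
      next
        case True
        then obtain l1 l2 where l: "l = l1 @ l2" and len1: "length l1 = Suc K1" and len2: "length l2 = Suc K2"
          and ok1: "okw T1 (x0 + int (Suc K1)) l1" and ok2: "okw T2 (int K2) l2"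
          and cn: "-2 + int (cntT l1) + int (cntT l2) = 0"
          and su: "in_supp I (endw T1 (x0 + int (Suc K1)) l1, endw T2 (int K2) l2)"
          unfolding SSa by blast
        have c20: "cntT l2 \<noteq> 0" using ok2 len2 cnt0[of l2] by (auto simp: okw_noT0)
        have c11: "\<not> (cntT l1 = 1 \<and> cntT l2 = 1)"
        proof
          assume "cntT l1 = 1 \<and> cntT l2 = 1"
          then obtain A1 C1 A2 C2 where "l1 = A1 @ True # C1" "True \<notin> set A1" "True \<notin> set C1"
            "l2 = A2 @ True # C2" "True \<notin> set A2" "True \<notin> set C2" using cnt1 by metis
          then show False using su len1 len2 ii[of C1 C2] by (simp add: endw_noT endw_noT0)
        qed
        from cn c20 c11 have "cntT l1 = 0 \<and> cntT l2 = 2" by linarith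
        then obtain A B C where l2: "l2 = A @ True # B @ True # C" and nA: "True \<notin> set A" and nB: "True \<notin> set B"
          and nC: "True \<notin> set C" and n1: "True \<notin> set l1" using cnt2 cnt0 by metis
        have nA1: "True \<notin> set (l1 @ A)" using nA n1 by simp
        have lf: "l = (l1 @ A) @ True # B @ True # C" using l l2 by simp
        have oD: "okw T2 (int K2) (A @ False # B @ True # C) \<and> endw T2 (int K2) (A @ False # B @ True # C) = endw T2 (int K2) l2
          \<and> okw T2 (int K2) (A @ True # B @ False # C) \<and> endw T2 (int K2) (A @ True # B @ False # C) \<le> endw T2 (int K2) l2
          \<and> 0 \<le> endw T2 (int K2) (A @ True # B @ False # C)"
          using oneD[OF nA nB nC, of T2 "int K2"] ok2 len2 K2T l2 by simp
        have e1nn: "0 \<le> endw T1 (x0 + int (Suc K1)) l1" using in_supp_nn[OF su] by blast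
        have m1: "(l1 @ A) @ False # B @ True # C \<in> S (-1) a" unfolding SSa
        proof (rule exI[of _ l1], rule exI[of _ "A @ False # B @ True # C"], intro conjI)
          show "-1 + int (cntT l1) + int (cntT (A @ False # B @ True # C)) = 0"
            using cnt0[of A] cnt0[of B] cnt0[of C] cnt0[of l1] nA nB nC n1 by simp
          show "in_supp I (endw T1 (x0 + int (Suc K1)) l1, endw T2 (int K2) (A @ False # B @ True # C))"
            using su oD by simp
        qed (use len1 len2 l2 ok1 oD in auto)
        have m2: "(l1 @ A) @ True # B @ False # C \<in> S (-1) a" unfolding SSa
        proof (rule exI[of _ l1], rule exI[of _ "A @ True # B @ False # C"], intro conjI)
          show "-1 + int (cntT l1) + int (cntT (A @ True # B @ False # C)) = 0"
            using cnt0[of A] cnt0[of B] cnt0[of C] cnt0[of l1] nA nB nC n1 by simp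
          show "in_supp I (endw T1 (x0 + int (Suc K1)) l1, endw T2 (int K2) (A @ True # B @ False # C))"
            using in_supp_down[OF MI su] oD e1nn by (simp add: nonneg_def ple_def)
        qed (use len1 len2 l2 ok1 oD in auto)
        have "ddf S (-1) a z l = z ((l1 @ A) @ False # B @ True # C) - z ((l1 @ A) @ True # B @ False # C)"
          unfolding lf using ddf2[where A="l1 @ A" and B=B and C=C and S=S and a=a and z=z, OF True[unfolded lf] nA1 nB nC] .
        also have "\<dots> = 0" using m1 m2 by (simp add: z_def)
        finally show ?thesis by (simp add: zv_def)
      qed
    qed
    have "z o2 \<noteq> 0" using o2S by (simp add: z_def)
    then have nb: "\<not>(\<exists>b. (\<forall>l. b l \<noteq> 0 \<longrightarrow> l \<in> S 0 a) \<and> ddf S 0 a b = z)" using not_bdry[where S=S and a=a and z=z, OF S0] by blast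
    have "\<forall>l. z l \<noteq> 0 \<longrightarrow> l \<in> S (-1) a" by (simp add: z_def)
    then show ?thesis using cyc nb unfolding S_def by blast
  qed
qed

end



theorem mainTheorem14:
  fixes I :: "(nat \<times> nat) set" and t k :: "nat \<times> nat"
  assumes "monomial_ideal I"
    and "pos_t_determined t I"
    and "1 \<le> fst k" "1 \<le> snd k" "fst k \<le> fst t + 1" "snd k \<le> snd t + 1"
  shows "cohomology_zero (nak t k (quot I :: 'k::field gcx)) 1 \<longleftrightarrow>
           (cc (quot I :: 'k gcx) 0 (psub (padd (pint t) (1,1)) (pint k)) \<noteq> {zv}
            \<or> (\<forall>x. nonneg x \<and> cc (quot I :: 'k gcx) 0 x \<noteq> {zv} \<longrightarrow>
                   ple (0,0) x \<and> ple x (psub (pint t) (pint k))))"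
proof -
  interpret nsetup I t k using assms by (simp add: nsetup_def)
  let ?D = "nak t k (quot I :: 'k gcx)"
  let ?S = "SS t k I"
  have g: "good ?D ?S"
    unfolding nak_def SS_def by (intro good_funpow good_quot MI)
  have cq: "cc (quot I :: 'k gcx) 0 x \<noteq> {zv} \<longleftrightarrow> in_supp I x" for x
  proof (cases "in_supp I x")
    case True
    have "constv 1 \<noteq> (zv :: 'k vec)" by (auto simp: constv_def zv_def fun_eq_iff)
    then have "range constv \<noteq> {zv :: 'k vec}" by (metis rangeI singletonD)
    then show ?thesis using True by (simp add: quot_def)
  next
    case False then show ?thesis by (simp add: quot_def)
  qed
  have zvcc: "zv \<in> cc ?D n a" for n a by (simp add: good_cc[OF g] zv_def)
  have hz: "cohomology_zero ?D 1 \<longleftrightarrow> (\<forall>a (z::'k vec). (\<forall>l. z l \<noteq> 0 \<longrightarrow> l \<in> ?S (-1) a) \<and> ddf ?S (-1) a z = zv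
       \<longrightarrow> (\<exists>b. (\<forall>l. b l \<noteq> 0 \<longrightarrow> l \<in> ?S 0 a) \<and> ddf ?S 0 a b = z))"
  proof -
    have "cohomology_zero ?D 1 \<longleftrightarrow> (\<forall>a. \<forall>z\<in>cc ?D (-1) a. dd ?D (-1) a z = zv \<longrightarrow> (\<exists>b\<in>cc ?D 0 a. dd ?D 0 a b = z))"
      by (simp add: cohomology_zero_def homology_zero_def)
    also have "\<dots> \<longleftrightarrow> (\<forall>a (z::'k vec). (\<forall>l. z l \<noteq> 0 \<longrightarrow> l \<in> ?S (-1) a) \<and> ddf ?S (-1) a z = zv
       \<longrightarrow> (\<exists>b. (\<forall>l. b l \<noteq> 0 \<longrightarrow> l \<in> ?S 0 a) \<and> ddf ?S 0 a b = z))"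
    proof -
      have "(\<forall>z\<in>cc ?D (-1) a. dd ?D (-1) a z = zv \<longrightarrow> (\<exists>b\<in>cc ?D 0 a. dd ?D 0 a b = z))
        \<longleftrightarrow> (\<forall>(z::'k vec). (\<forall>l. z l \<noteq> 0 \<longrightarrow> l \<in> ?S (-1) a) \<and> ddf ?S (-1) a z = zv
       \<longrightarrow> (\<exists>b. (\<forall>l. b l \<noteq> 0 \<longrightarrow> l \<in> ?S 0 a) \<and> ddf ?S 0 a b = z))" for a
      proof -
        have 1: "z \<in> cc ?D n a \<longleftrightarrow> (\<forall>l. z l \<noteq> 0 \<longrightarrow> l \<in> ?S n a)" for z n by (simp add: good_cc[OF g])
        show ?thesis
        proof (intro iffI allI impI ballI)
          fix z :: "'k vec"
          assume H: "\<forall>z\<in>cc ?D (-1) a. dd ?D (-1) a z = zv \<longrightarrow> (\<exists>b\<in>cc ?D 0 a. dd ?D 0 a b = z)"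
            and Z: "(\<forall>l. z l \<noteq> 0 \<longrightarrow> l \<in> ?S (-1) a) \<and> ddf ?S (-1) a z = zv"
          then have zc: "z \<in> cc ?D (-1) a" using 1 by blast
          then have "dd ?D (-1) a z = zv" using Z good_dd[OF g zc] by simp
          then obtain b where bc: "b \<in> cc ?D 0 a" and "dd ?D 0 a b = z" using H zc by blast
          then show "\<exists>b. (\<forall>l. b l \<noteq> 0 \<longrightarrow> l \<in> ?S 0 a) \<and> ddf ?S 0 a b = z"
            using 1 good_dd[OF g bc] by auto
        next
          fix z :: "'k vec"
          assume H: "\<forall>(z::'k vec). (\<forall>l. z l \<noteq> 0 \<longrightarrow> l \<in> ?S (-1) a) \<and> ddf ?S (-1) a z = zv
             \<longrightarrow> (\<exists>b. (\<forall>l. b l \<noteq> 0 \<longrightarrow> l \<in> ?S 0 a) \<and> ddf ?S 0 a b = z)"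
          assume zc: "z \<in> cc ?D (-1) a" and dz: "dd ?D (-1) a z = zv"
          have "(\<forall>l. z l \<noteq> 0 \<longrightarrow> l \<in> ?S (-1) a) \<and> ddf ?S (-1) a z = zv" using zc 1 dz good_dd[OF g zc] by auto
          then obtain b where b: "\<forall>l. b l \<noteq> 0 \<longrightarrow> l \<in> ?S 0 a" and "ddf ?S 0 a b = z" using H by blast
          moreover have bc: "b \<in> cc ?D 0 a" using b 1 by blast
          ultimately show "\<exists>b\<in>cc ?D 0 a. dd ?D 0 a b = z" using good_dd[OF g bc] by auto
        qed
      qed
      then show ?thesis by blast
    qed
    finally show ?thesis .
  qed
  have pi: "psub (padd (pint t) (1,1)) (pint k) = (int (fst t) + 1 - int (fst k), int (snd t) + 1 - int (snd k))"
    by (simp add: psub_def padd_def pint_def)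
  have ii_eq: "(\<forall>x. nonneg x \<and> cc (quot I :: 'k gcx) 0 x \<noteq> {zv} \<longrightarrow> ple (0,0) x \<and> ple x (psub (pint t) (pint k)))
     \<longleftrightarrow> (\<forall>x. in_supp I x \<longrightarrow> fst x \<le> int (fst t) - int (fst k) \<and> snd x \<le> int (snd t) - int (snd k))"
    unfolding cq by (auto simp: in_supp_def nonneg_def ple_def psub_def pint_def)
  have main: "(\<forall>a (z::'k vec). (\<forall>l. z l \<noteq> 0 \<longrightarrow> l \<in> ?S (-1) a) \<and> ddf ?S (-1) a z = zv
       \<longrightarrow> (\<exists>b. (\<forall>l. b l \<noteq> 0 \<longrightarrow> l \<in> ?S 0 a) \<and> ddf ?S 0 a b = z)) \<longleftrightarrow>
     (in_supp I (int (fst t) + 1 - int (fst k), int (snd t) + 1 - int (snd k)) \<or>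
          (\<forall>x. in_supp I x \<longrightarrow> fst x \<le> int (fst t) - int (fst k) \<and> snd x \<le> int (snd t) - int (snd k)))"
  proof
    assume H: "\<forall>a (z::'k vec). (\<forall>l. z l \<noteq> 0 \<longrightarrow> l \<in> ?S (-1) a) \<and> ddf ?S (-1) a z = zv
       \<longrightarrow> (\<exists>b. (\<forall>l. b l \<noteq> 0 \<longrightarrow> l \<in> ?S 0 a) \<and> ddf ?S 0 a b = z)"
    show "in_supp I (int (fst t) + 1 - int (fst k), int (snd t) + 1 - int (snd k)) \<or>
          (\<forall>x. in_supp I x \<longrightarrow> fst x \<le> int (fst t) - int (fst k) \<and> snd x \<le> int (snd t) - int (snd k))"
    proof (rule ccontr)
      assume "\<not> ?thesis"
      then obtain x where ni: "\<not> in_supp I (int (fst t) + 1 - int (fst k), int (snd t) + 1 - int (snd k))"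
        and x: "in_supp I x" and o: "int (fst t) - int (fst k) < fst x \<or> int (snd t) - int (snd k) < snd x"
        by force
      from dirC[OF ni x o] obtain a and z :: "'k vec" where
        "(\<forall>l. z l \<noteq> 0 \<longrightarrow> l \<in> ?S (-1) a) \<and> ddf ?S (-1) a z = zv"
        "\<not>(\<exists>b. (\<forall>l. b l \<noteq> 0 \<longrightarrow> l \<in> ?S 0 a) \<and> ddf ?S 0 a b = z)" by blast
      then show False using H by blast
    qed
  next
    assume R: "in_supp I (int (fst t) + 1 - int (fst k), int (snd t) + 1 - int (snd k)) \<or>
          (\<forall>x. in_supp I x \<longrightarrow> fst x \<le> int (fst t) - int (fst k) \<and> snd x \<le> int (snd t) - int (snd k))"
    show "\<forall>a (z::'k vec). (\<forall>l. z l \<noteq> 0 \<longrightarrow> l \<in> ?S (-1) a) \<and> ddf ?S (-1) a z = zv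
       \<longrightarrow> (\<exists>b. (\<forall>l. b l \<noteq> 0 \<longrightarrow> l \<in> ?S 0 a) \<and> ddf ?S 0 a b = z)"
    proof (intro allI impI)
      fix a and z :: "'k vec"
      assume Z: "(\<forall>l. z l \<noteq> 0 \<longrightarrow> l \<in> ?S (-1) a) \<and> ddf ?S (-1) a z = zv"
      from R show "\<exists>b. (\<forall>l. b l \<noteq> 0 \<longrightarrow> l \<in> ?S 0 a) \<and> ddf ?S 0 a b = z"
      proof
        assume i: "in_supp I (int (fst t) + 1 - int (fst k), int (snd t) + 1 - int (snd k))"
        show ?thesis using dirB[OF i] Z by blast
      next
        assume ii: "\<forall>x. in_supp I x \<longrightarrow> fst x \<le> int (fst t) - int (fst k) \<and> snd x \<le> int (snd t) - int (snd k)"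
        have "?S (-1) a = {}" using dirA[OF ii] .
        then have "z = zv" using Z by (auto simp: zv_def fun_eq_iff)
        moreover have "ddf ?S 0 a zv = (zv :: 'k vec)" by (rule ddf_zv)
        ultimately show ?thesis by (intro exI[of _ zv]) (auto simp: zv_def)
      qed
    qed
  qed
  have ii2: "(\<forall>x. nonneg x \<and> in_supp I x \<longrightarrow> ple (0,0) x \<and> ple x (psub (pint t) (pint k)))
     \<longleftrightarrow> (\<forall>x. in_supp I x \<longrightarrow> fst x \<le> int (fst t) - int (fst k) \<and> snd x \<le> int (snd t) - int (snd k))"
    using ii_eq unfolding cq .
  show ?thesis unfolding hz pi cq ii2 using main .
qed



end
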